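(* Let $\mathcal P$ be a nilpotent presentation over $R$ (a field or $\mathbb Z$) on generators $a_1,\ldots,a_n$ with data $r_i,e_{i,k},b_{i,j,k}$ as in the context, let $c$ be its collection function, let $w$ be its weight function and $d=\max\{w(a_1),\ldots,w(a_n)\}$. Then $\mathcal P$ is consistent if and only if the following equations (test equations) hold in the free algebra: \begin{align*} c(a_k\,c(a_ja_i)) &= c(c(a_ka_j)\,a_i) && (1\le i,j,k\le n,\ w(a_k)+w(a_j)+w(a_i)\le d),\\ c(r_j\,c(a_ja_i)) &= c(c(r_ja_j)\,a_i) && (r_j<\infty,\ w(a_j)+w(a_i)\le d),\\ c(r_i\,c(a_ja_i)) &= c(a_j\,c(r_ia_i)) && (r_i<\infty,\ w(a_j)+w(a_i)\le d). \end{align*}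
   Context: $R$ is a field or the ring $\mathbb Z$; algebras are associative (not necessarily unital). A nilpotent presentation over $R$ on generators $a_1,\ldots,a_n$ consists of $r_1,\ldots,r_n\in\mathbb N\cup\{\infty\}$ (all equal to $\infty$ when $R$ is a field) and elements $e_{i,k},b_{i,j,k}\in R$ with $0\le e_{i,k},b_{i,j,k}<r_k$ whenever $r_k<\infty$, and has defining relations $r_ia_i=e_{i,i+1}a_{i+1}+\cdots+e_{i,n}a_n$ (for $r_i<\infty$) and $a_ja_i=b_{i,j,\ell+1}a_{\ell+1}+\cdots+b_{i,j,n}a_n$ for all $1\le i,j\le n$, where $\ell=\max\{i,j\}$ (coefficients $b_{i,j,k}$ with $k\le\ell$ are taken to be $0$). The presented algebra is $A=F/I$, where $F$ is the free associative $R$-algebra on $a_1,\ldots,a_n$ and $I$ the ideal generated by the differences of the two sides of the relations. A reduced form is an element $x_1a_1+\cdots+x_na_n$ with $x_i\in R$ and $0\le x_i<r_i$ when $r_i<\infty$. The collection function $c\colon F\to F$ maps each element of $F$ to a reduced form congruent to it modulo $I$, computed by the collection algorithm which uses linearity, rewrites products of generators $a_ja_i$ by the right-hand sides of the product relations, and reduces coefficients using the relations $r_ia_i=\ldots$. The presentation is consistent if every element of $A$ is represented by exactly one reduced form. The weight function $w\colon\{a_1,\ldots,a_n\}\to\mathbb N$ is the pointwise minimal function with $w(a_k)\ge w(a_i)$ whenever $e_{i,k}\ne0$ and $w(a_k)\ge w(a_i)+w(a_j)$ whenever $b_{i,j,k}\ne0$. *)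

theory Defs
  imports Main "HOL-Library.Poly_Mapping" "HOL-Library.Extended_Nat"
begin

text \<open>
  Data of a nilpotent presentation on generators a_1,...,a_n (indices 1..n):
  n :: nat, r :: nat => enat (r i = \<infinity> means no power relation),
  e i k (coefficient of a_k in the relation for r_i a_i),
  b i j k (coefficient of a_k in the product a_j a_i).
  Coefficients outside the relevant index ranges (k <= i resp. k <= max i j)
  are ignored, i.e. treated as 0.
  The free associative (non-unital) algebra F on a_1..a_n over R is represented
  by finitely supported functions from words (nat lists) to R, restricted to
  nonempty words over the letters 1..n.
\<close>

type_synonym 'r falg = "nat list \<Rightarrow>\<^sub>0 'r"

definition in_F :: "nat \<Rightarrow> 'r::zero falg \<Rightarrow> bool" where
  "in_F n f \<longleftrightarrow> (\<forall>w\<in>Poly_Mapping.keys f. w \<noteq> [] \<and> set w \<subseteq> {1..n})"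

definition gen :: "nat \<Rightarrow> 'r::comm_ring_1 falg" where
  "gen i = Poly_Mapping.single [i] 1"

definition fmul :: "'r::comm_ring_1 falg \<Rightarrow> 'r falg \<Rightarrow> 'r falg" where
  "fmul p q = (\<Sum>u\<in>Poly_Mapping.keys p. \<Sum>v\<in>Poly_Mapping.keys q. Poly_Mapping.single (u @ v) (Poly_Mapping.lookup p u * Poly_Mapping.lookup q v))"

definition smul :: "'r::comm_ring_1 \<Rightarrow> 'r falg \<Rightarrow> 'r falg" where
  "smul x p = (\<Sum>w\<in>Poly_Mapping.keys p. Poly_Mapping.single w (x * Poly_Mapping.lookup p w))"

definition in_range :: "enat \<Rightarrow> 'r::comm_ring_1 \<Rightarrow> bool" where
  "in_range m x \<longleftrightarrow> (case m of \<infinity> \<Rightarrow> True | enat t \<Rightarrow> x \<in> of_nat ` {0..<t})"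

text \<open>Nilpotent presentation over R. Here \<nat> is read as the positive integers,
  so finite r_i are >= 1.\<close>
definition nilpotent_presentation ::
  "nat \<Rightarrow> (nat \<Rightarrow> enat) \<Rightarrow> (nat \<Rightarrow> nat \<Rightarrow> 'r::comm_ring_1) \<Rightarrow> (nat \<Rightarrow> nat \<Rightarrow> nat \<Rightarrow> 'r) \<Rightarrow> bool" where
  "nilpotent_presentation n r e b \<longleftrightarrow>
     (\<forall>i\<in>{1..n}. r i \<noteq> 0) \<and>
     (\<forall>i\<in>{1..n}. \<forall>k. r i \<noteq> \<infinity> \<and> i < k \<and> k \<le> n \<longrightarrow> in_range (r k) (e i k)) \<and>
     (\<forall>i\<in>{1..n}. \<forall>j\<in>{1..n}. \<forall>k. max i j < k \<and> k \<le> n \<longrightarrow> in_range (r k) (b i j k))"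

definition power_rel :: "nat \<Rightarrow> (nat \<Rightarrow> enat) \<Rightarrow> (nat \<Rightarrow> nat \<Rightarrow> 'r::comm_ring_1) \<Rightarrow> nat \<Rightarrow> 'r falg" where
  "power_rel n r e i = smul (of_nat (the_enat (r i))) (gen i) - (\<Sum>k\<in>{i<..n}. smul (e i k) (gen k))"

definition product_rel :: "nat \<Rightarrow> (nat \<Rightarrow> nat \<Rightarrow> nat \<Rightarrow> 'r::comm_ring_1) \<Rightarrow> nat \<Rightarrow> nat \<Rightarrow> 'r falg" where
  "product_rel n b i j = fmul (gen j) (gen i) - (\<Sum>k\<in>{max i j<..n}. smul (b i j k) (gen k))"

definition relations :: "nat \<Rightarrow> (nat \<Rightarrow> enat) \<Rightarrow> (nat \<Rightarrow> nat \<Rightarrow> 'r::comm_ring_1) \<Rightarrow> (nat \<Rightarrow> nat \<Rightarrow> nat \<Rightarrow> 'r) \<Rightarrow> 'r falg set" where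
  "relations n r e b =
     {power_rel n r e i | i. i \<in> {1..n} \<and> r i \<noteq> \<infinity>} \<union>
     {product_rel n b i j | i j. i \<in> {1..n} \<and> j \<in> {1..n}}"

inductive_set ideal_gen :: "nat \<Rightarrow> 'r::comm_ring_1 falg set \<Rightarrow> 'r falg set" for n S where
  base: "s \<in> S \<Longrightarrow> s \<in> ideal_gen n S"
| zero: "0 \<in> ideal_gen n S"
| add: "x \<in> ideal_gen n S \<Longrightarrow> y \<in> ideal_gen n S \<Longrightarrow> x + y \<in> ideal_gen n S"
| scal: "x \<in> ideal_gen n S \<Longrightarrow> smul c x \<in> ideal_gen n S"
| mult_left: "x \<in> ideal_gen n S \<Longrightarrow> in_F n f \<Longrightarrow> fmul f x \<in> ideal_gen n S"
| mult_right: "x \<in> ideal_gen n S \<Longrightarrow> in_F n f \<Longrightarrow> fmul x f \<in> ideal_gen n S"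

definition pres_ideal where
  "pres_ideal n r e b = ideal_gen n (relations n r e b)"

definition lin :: "nat \<Rightarrow> (nat \<Rightarrow> 'r::comm_ring_1) \<Rightarrow> 'r falg" where
  "lin n x = (\<Sum>k\<in>{1..n}. smul (x k) (gen k))"

definition reduced_form :: "nat \<Rightarrow> (nat \<Rightarrow> enat) \<Rightarrow> 'r::comm_ring_1 falg \<Rightarrow> bool" where
  "reduced_form n r v \<longleftrightarrow> (\<exists>x. (\<forall>k\<in>{1..n}. in_range (r k) (x k)) \<and> v = lin n x)"

definition consistent ::
  "nat \<Rightarrow> (nat \<Rightarrow> enat) \<Rightarrow> (nat \<Rightarrow> nat \<Rightarrow> 'r::comm_ring_1) \<Rightarrow> (nat \<Rightarrow> nat \<Rightarrow> nat \<Rightarrow> 'r) \<Rightarrow> bool" where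
  "consistent n r e b \<longleftrightarrow>
     (\<forall>f. in_F n f \<longrightarrow> (\<exists>!v. reduced_form n r v \<and> f - v \<in> pres_ideal n r e b))"

text \<open>Coefficient vectors are functions nat => R (indices 1..n).
  Division with remainder x = m*q + s with s in {0,...,m-1} (unique in \<int>;
  only used when r_k is finite, i.e. for R = \<int>).\<close>
definition cdivmod :: "'r::comm_ring_1 \<Rightarrow> nat \<Rightarrow> 'r \<times> 'r" where
  "cdivmod x m = (THE (q, s). x = of_nat m * q + s \<and> s \<in> of_nat ` {0..<m})"

definition reduce_step ::
  "nat \<Rightarrow> (nat \<Rightarrow> enat) \<Rightarrow> (nat \<Rightarrow> nat \<Rightarrow> 'r::comm_ring_1) \<Rightarrow> nat \<Rightarrow> (nat \<Rightarrow> 'r) \<Rightarrow> (nat \<Rightarrow> 'r)" where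
  "reduce_step n r e k x =
     (case r k of \<infinity> \<Rightarrow> x
      | enat m \<Rightarrow> (let (q, s) = cdivmod (x k) m in
          (\<lambda>l. if l = k then s else if k < l \<and> l \<le> n then x l + q * e k l else x l)))"

text \<open>Reduce coefficients using r_k a_k = e_{k,k+1} a_{k+1} + ..., for k = 1, ..., n in turn.\<close>
definition reduce_vec ::
  "nat \<Rightarrow> (nat \<Rightarrow> enat) \<Rightarrow> (nat \<Rightarrow> nat \<Rightarrow> 'r::comm_ring_1) \<Rightarrow> (nat \<Rightarrow> 'r) \<Rightarrow> (nat \<Rightarrow> 'r)" where
  "reduce_vec n r e x = fold (reduce_step n r e) [1..<Suc n] x"

text \<open>(x_1 a_1 + ... + x_n a_n) a_i, rewritten by the product relations
  a_k a_i = b_{i,k,max i k+1} a_{max i k+1} + ... + b_{i,k,n} a_n.\<close>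
definition mul_gen_vec ::
  "nat \<Rightarrow> (nat \<Rightarrow> nat \<Rightarrow> nat \<Rightarrow> 'r::comm_ring_1) \<Rightarrow> (nat \<Rightarrow> 'r) \<Rightarrow> nat \<Rightarrow> (nat \<Rightarrow> 'r)" where
  "mul_gen_vec n b x i = (\<lambda>l. \<Sum>k\<in>{1..n}. x k * (if max i k < l \<and> l \<le> n then b i k l else 0))"

definition unit_vec :: "nat \<Rightarrow> nat \<Rightarrow> 'r::comm_ring_1" where
  "unit_vec i = (\<lambda>l. if l = i then 1 else 0)"

fun collect_word ::
  "nat \<Rightarrow> (nat \<Rightarrow> enat) \<Rightarrow> (nat \<Rightarrow> nat \<Rightarrow> 'r::comm_ring_1) \<Rightarrow> (nat \<Rightarrow> nat \<Rightarrow> nat \<Rightarrow> 'r) \<Rightarrow> nat list \<Rightarrow> (nat \<Rightarrow> 'r)" where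
  "collect_word n r e b [] = (\<lambda>_. 0)"
| "collect_word n r e b (i # w) =
     reduce_vec n r e (foldl (\<lambda>x j. reduce_vec n r e (mul_gen_vec n b x j)) (unit_vec i) w)"

definition collection ::
  "nat \<Rightarrow> (nat \<Rightarrow> enat) \<Rightarrow> (nat \<Rightarrow> nat \<Rightarrow> 'r::comm_ring_1) \<Rightarrow> (nat \<Rightarrow> nat \<Rightarrow> nat \<Rightarrow> 'r) \<Rightarrow> 'r falg \<Rightarrow> 'r falg" where
  "collection n r e b f =
     lin n (reduce_vec n r e (\<lambda>l. \<Sum>w\<in>Poly_Mapping.keys f. Poly_Mapping.lookup f w * collect_word n r e b w l))"

definition admissible_weight ::
  "nat \<Rightarrow> (nat \<Rightarrow> enat) \<Rightarrow> (nat \<Rightarrow> nat \<Rightarrow> 'r::comm_ring_1) \<Rightarrow> (nat \<Rightarrow> nat \<Rightarrow> nat \<Rightarrow> 'r) \<Rightarrow> (nat \<Rightarrow> nat) \<Rightarrow> bool" where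
  "admissible_weight n r e b w \<longleftrightarrow>
     (\<forall>k\<in>{1..n}. 1 \<le> w k) \<and>
     (\<forall>i\<in>{1..n}. \<forall>k. r i \<noteq> \<infinity> \<and> i < k \<and> k \<le> n \<and> e i k \<noteq> 0 \<longrightarrow> w i \<le> w k) \<and>
     (\<forall>i\<in>{1..n}. \<forall>j\<in>{1..n}. \<forall>k. max i j < k \<and> k \<le> n \<and> b i j k \<noteq> 0 \<longrightarrow> w i + w j \<le> w k)"

definition weight ::
  "nat \<Rightarrow> (nat \<Rightarrow> enat) \<Rightarrow> (nat \<Rightarrow> nat \<Rightarrow> 'r::comm_ring_1) \<Rightarrow> (nat \<Rightarrow> nat \<Rightarrow> nat \<Rightarrow> 'r) \<Rightarrow> nat \<Rightarrow> nat" where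
  "weight n r e b = (THE w. admissible_weight n r e b w \<and>
      (\<forall>w'. admissible_weight n r e b w' \<longrightarrow> (\<forall>k\<in>{1..n}. w k \<le> w' k)) \<and>
      (\<forall>k. k \<notin> {1..n} \<longrightarrow> w k = 0))"

definition max_weight where
  "max_weight n r e b = Max (weight n r e b ` {1..n})"

definition test_equations ::
  "nat \<Rightarrow> (nat \<Rightarrow> enat) \<Rightarrow> (nat \<Rightarrow> nat \<Rightarrow> 'r::comm_ring_1) \<Rightarrow> (nat \<Rightarrow> nat \<Rightarrow> nat \<Rightarrow> 'r) \<Rightarrow> bool" where
  "test_equations n r e b \<longleftrightarrow>
    (let c = collection n r e b; w = weight n r e b; d = max_weight n r e b;
         rr = (\<lambda>i. (of_nat (the_enat (r i)) :: 'r)); a = (gen :: nat \<Rightarrow> 'r falg) in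
     (\<forall>i\<in>{1..n}. \<forall>j\<in>{1..n}. \<forall>k\<in>{1..n}. w k + w j + w i \<le> d \<longrightarrow>
        c (fmul (a k) (c (fmul (a j) (a i)))) = c (fmul (c (fmul (a k) (a j))) (a i))) \<and>
     (\<forall>i\<in>{1..n}. \<forall>j\<in>{1..n}. r j \<noteq> \<infinity> \<and> w j + w i \<le> d \<longrightarrow>
        c (smul (rr j) (c (fmul (a j) (a i)))) = c (fmul (c (smul (rr j) (a j))) (a i))) \<and>
     (\<forall>i\<in>{1..n}. \<forall>j\<in>{1..n}. r i \<noteq> \<infinity> \<and> w j + w i \<le> d \<longrightarrow>
        c (smul (rr i) (c (fmul (a j) (a i)))) = c (fmul (a j) (c (smul (rr i) (a i))))))"

end

theory Submission
  imports Defs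
begin



lemma lookup_smul: "Poly_Mapping.lookup (smul c p) w = c * Poly_Mapping.lookup p w"
  unfolding smul_def lookup_sum by (auto simp: lookup_single in_keys_iff when_def)

lemma smul_add: "smul c (p + q) = smul c p + smul c q"
  by (rule poly_mapping_eqI) (simp add: lookup_smul lookup_add algebra_simps)
lemma smul_diff: "smul c (p - q) = smul c p - smul c q"
  by (rule poly_mapping_eqI) (simp add: lookup_smul lookup_minus algebra_simps)
lemma smul_zero[simp]: "smul c 0 = 0"
  by (rule poly_mapping_eqI) (simp add: lookup_smul)
lemma smul_add_left: "smul (c + d) p = smul c p + smul d p"
  by (rule poly_mapping_eqI) (simp add: lookup_smul lookup_add algebra_simps)
lemma smul_smul: "smul c (smul d p) = smul (c * d) p"
  by (rule poly_mapping_eqI) (simp add: lookup_smul algebra_simps)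
lemma smul_one[simp]: "smul 1 p = p"
  by (rule poly_mapping_eqI) (simp add: lookup_smul)
lemma smul_single: "smul c (Poly_Mapping.single w a) = Poly_Mapping.single w (c * a)"
  by (rule poly_mapping_eqI) (simp add: lookup_smul lookup_single when_def)
lemma smul_sum: "smul c (sum f S) = (\<Sum>s\<in>S. smul c (f s))"
  by (induction S rule: infinite_finite_induct) (auto simp: smul_add)
lemma smul_minus_one: "smul (-1) p = - p"
  by (rule poly_mapping_eqI) (simp add: lookup_smul)

lemma fmul_superset:
  assumes "finite A" "Poly_Mapping.keys p \<subseteq> A" "finite B" "Poly_Mapping.keys q \<subseteq> B"
  shows "fmul p q = (\<Sum>u\<in>A. \<Sum>v\<in>B. Poly_Mapping.single (u @ v) (Poly_Mapping.lookup p u * Poly_Mapping.lookup q v))"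
proof -
  have "fmul p q = (\<Sum>u\<in>A. \<Sum>v\<in>Poly_Mapping.keys q. Poly_Mapping.single (u @ v) (Poly_Mapping.lookup p u * Poly_Mapping.lookup q v))"
    unfolding fmul_def
    by (rule sum.mono_neutral_left[OF assms(1,2)]) (auto simp: in_keys_iff)
  also have "\<dots> = (\<Sum>u\<in>A. \<Sum>v\<in>B. Poly_Mapping.single (u @ v) (Poly_Mapping.lookup p u * Poly_Mapping.lookup q v))"
    by (rule sum.cong[OF refl], rule sum.mono_neutral_left[OF assms(3,4)]) (auto simp: in_keys_iff)
  finally show ?thesis .
qed

lemma fmul_add_left: "fmul (p + p') q = fmul p q + fmul p' q"
proof -
  let ?A = "Poly_Mapping.keys p \<union> Poly_Mapping.keys p' \<union> Poly_Mapping.keys (p + p')"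
  let ?B = "Poly_Mapping.keys q"
  have f: "finite ?A" by simp
  show ?thesis
    apply (subst (1 2 3) fmul_superset[OF f _ finite_keys subset_refl])
    by (auto simp: lookup_add distrib_right single_add sum.distrib)
qed

lemma fmul_add_right: "fmul p (q + q') = fmul p q + fmul p q'"
proof -
  let ?B = "Poly_Mapping.keys q \<union> Poly_Mapping.keys q' \<union> Poly_Mapping.keys (q + q')"
  let ?A = "Poly_Mapping.keys p"
  have f: "finite ?B" by simp
  show ?thesis
    apply (subst (1 2 3) fmul_superset[OF finite_keys subset_refl f])
    by (auto simp: lookup_add distrib_left single_add sum.distrib)
qed

lemma fmul_smul_left: "fmul (smul c p) q = smul c (fmul p q)"
proof -
  have s: "Poly_Mapping.keys (smul c p) \<subseteq> Poly_Mapping.keys p"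
    by (auto simp: in_keys_iff lookup_smul)
  show ?thesis
    apply (subst fmul_superset[OF finite_keys s finite_keys subset_refl])
    by (simp add: fmul_def smul_sum smul_single lookup_smul mult.assoc)
qed

lemma fmul_smul_right: "fmul p (smul c q) = smul c (fmul p q)"
proof -
  have s: "Poly_Mapping.keys (smul c q) \<subseteq> Poly_Mapping.keys q"
    by (auto simp: in_keys_iff lookup_smul)
  show ?thesis
    apply (subst fmul_superset[OF finite_keys subset_refl finite_keys s])
    by (simp add: fmul_def smul_sum smul_single lookup_smul algebra_simps)
qed

lemma fmul_zero_left[simp]: "fmul 0 q = 0" by (simp add: fmul_def)
lemma fmul_zero_right[simp]: "fmul p 0 = 0" by (simp add: fmul_def)

lemma fmul_minus_left: "fmul (- p) q = - fmul p q"
  by (metis add.inverse_unique fmul_add_left add.right_inverse fmul_zero_left)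
lemma fmul_minus_right: "fmul p (- q) = - fmul p q"
  by (metis add.inverse_unique fmul_add_right add.right_inverse fmul_zero_right)
lemma fmul_diff_left: "fmul (p - p') q = fmul p q - fmul p' q"
  by (simp only: diff_conv_add_uminus fmul_add_left fmul_minus_left)
lemma fmul_diff_right: "fmul p (q - q') = fmul p q - fmul p q'"
  by (simp only: diff_conv_add_uminus fmul_add_right fmul_minus_right)

lemma fmul_sum_left: "fmul (sum f S) q = (\<Sum>s\<in>S. fmul (f s) q)"
  by (induction S rule: infinite_finite_induct) (auto simp: fmul_add_left)
lemma fmul_sum_right: "fmul p (sum f S) = (\<Sum>s\<in>S. fmul p (f s))"
  by (induction S rule: infinite_finite_induct) (auto simp: fmul_add_right)

lemma fmul_single: "fmul (Poly_Mapping.single u a) (Poly_Mapping.single v c) = Poly_Mapping.single (u @ v) (a * c)"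
  by (simp add: fmul_def)

lemma pm_expand: "p = (\<Sum>w\<in>Poly_Mapping.keys p. Poly_Mapping.single w (Poly_Mapping.lookup p w))"
  by (rule poly_mapping_eqI) (simp add: lookup_sum lookup_single when_def in_keys_iff)

lemma fmul_single_right_gen:
  "fmul p (Poly_Mapping.single w c) = (\<Sum>u\<in>Poly_Mapping.keys p. Poly_Mapping.single (u @ w) (Poly_Mapping.lookup p u * c))"
proof -
  have "fmul p (Poly_Mapping.single w c) = (\<Sum>u\<in>Poly_Mapping.keys p. \<Sum>v\<in>{w}. Poly_Mapping.single (u @ v) (Poly_Mapping.lookup p u * Poly_Mapping.lookup (Poly_Mapping.single w c) v))"
    by (rule fmul_superset) auto
  then show ?thesis by simp
qed

lemma fmul_single_right_word:
  "fmul (fmul p (Poly_Mapping.single w 1)) (Poly_Mapping.single v 1) = fmul p (Poly_Mapping.single (w @ v) 1)"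
proof -
  have "fmul (fmul p (Poly_Mapping.single w 1)) (Poly_Mapping.single v 1) =
     (\<Sum>u\<in>Poly_Mapping.keys p. fmul (Poly_Mapping.single (u @ w) (Poly_Mapping.lookup p u)) (Poly_Mapping.single v 1))"
    unfolding fmul_single_right_gen[of p w] fmul_sum_left by simp
  also have "\<dots> = (\<Sum>u\<in>Poly_Mapping.keys p. Poly_Mapping.single (u @ w @ v) (Poly_Mapping.lookup p u))"
    unfolding fmul_single by simp
  also have "\<dots> = fmul p (Poly_Mapping.single (w @ v) 1)"
    unfolding fmul_single_right_gen[of p "w @ v"] by simp
  finally show ?thesis .
qed

lemma keys_fmul: "Poly_Mapping.keys (fmul p q) \<subseteq> {u @ v | u v. u \<in> Poly_Mapping.keys p \<and> v \<in> Poly_Mapping.keys q}"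
  unfolding fmul_def
  apply (rule order.trans[OF keys_sum])
  apply (rule UN_least)
  apply (rule order.trans[OF keys_sum])
  by auto

lemma keys_smul: "Poly_Mapping.keys (smul c p) \<subseteq> Poly_Mapping.keys p"
  by (auto simp: in_keys_iff lookup_smul)

lemma in_F_add: "in_F n p \<Longrightarrow> in_F n q \<Longrightarrow> in_F n (p + q)"
  unfolding in_F_def using keys_add[of p q] by (meson UnE subsetD)
lemma in_F_smul: "in_F n p \<Longrightarrow> in_F n (smul c p)"
  unfolding in_F_def using keys_smul[of c p] by (meson subsetD)
lemma in_F_minus: "in_F n p \<Longrightarrow> in_F n (- p)"
  unfolding in_F_def by simp
lemma in_F_diff: "in_F n (p::'r::comm_ring_1 falg) \<Longrightarrow> in_F n q \<Longrightarrow> in_F n (p - q)"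
  unfolding in_F_def using keys_diff[of p q] by (meson UnE subsetD)
lemma in_F_zero[simp]: "in_F n 0"
  unfolding in_F_def by simp
lemma in_F_sum: "(\<And>s. s \<in> S \<Longrightarrow> in_F n (f s)) \<Longrightarrow> in_F n (sum f S)"
  by (induction S rule: infinite_finite_induct) (auto intro: in_F_add)
lemma in_F_fmul: "in_F n p \<Longrightarrow> in_F n q \<Longrightarrow> in_F n (fmul p q)"
  unfolding in_F_def using keys_fmul[of p q] by fastforce
lemma in_F_gen: "i \<in> {1..n} \<Longrightarrow> in_F n (gen i :: 'r::comm_ring_1 falg)"
  unfolding in_F_def gen_def by simp
lemma in_F_lin: "in_F n (lin n x)"
  unfolding lin_def by (auto intro!: in_F_sum in_F_smul in_F_gen)




locale pres =
  fixes n :: nat and r :: "nat \<Rightarrow> enat" and e :: "nat \<Rightarrow> nat \<Rightarrow> 'r::comm_ring_1"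
    and b :: "nat \<Rightarrow> nat \<Rightarrow> nat \<Rightarrow> 'r"
  assumes div_ex: "\<And>k m x. k \<in> {1..n} \<Longrightarrow> r k = enat m \<Longrightarrow>
     \<exists>!p. (x::'r) = of_nat m * fst p + snd p \<and> snd p \<in> of_nat ` {0..<m}"
begin

lemma m_pos: "k \<in> {1..n} \<Longrightarrow> r k = enat m \<Longrightarrow> 0 < m"
  using div_ex[of k m 0] by (cases m) auto

lemma cdivmod_prop:
  assumes "k \<in> {1..n}" "r k = enat m"
  shows "(x::'r) = of_nat m * fst (cdivmod x m) + snd (cdivmod x m) \<and> snd (cdivmod x m) \<in> of_nat ` {0..<m}"
proof -
  have "\<exists>!p. (case p of (q, s) \<Rightarrow> x = of_nat m * q + s \<and> s \<in> of_nat ` {0..<m})"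
    using div_ex[OF assms, of x] by (simp add: split_def)
  from theI'[OF this] show ?thesis unfolding cdivmod_def by (simp add: split_def)
qed

lemma cdivmod_unique:
  assumes "k \<in> {1..n}" "r k = enat m" "(x::'r) = of_nat m * q + s" "s \<in> of_nat ` {0..<m}"
  shows "cdivmod x m = (q, s)"
proof -
  have u: "\<exists>!p. x = of_nat m * fst p + snd p \<and> snd p \<in> of_nat ` {0..<m}" using div_ex[OF assms(1,2)] .
  have "x = of_nat m * fst (cdivmod x m) + snd (cdivmod x m) \<and> snd (cdivmod x m) \<in> of_nat ` {0..<m}"
    using cdivmod_prop[OF assms(1,2)] .
  moreover have "x = of_nat m * fst (q, s) + snd (q, s) \<and> snd (q, s) \<in> of_nat ` {0..<m}"
    using assms(3,4) by simp
  ultimately show ?thesis using u by blast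
qed

lemma div_unique:
  assumes "k \<in> {1..n}" "r k = enat m" "of_nat m * q + s = (of_nat m * q' + s'::'r)"
    "s \<in> of_nat ` {0..<m}" "s' \<in> of_nat ` {0..<m}"
  shows "q = q' \<and> s = s'"
proof -
  have "cdivmod (of_nat m * q + s) m = (q, s)" by (rule cdivmod_unique[OF assms(1,2) refl assms(4)])
  moreover have "cdivmod (of_nat m * q + s) m = (q', s')"
    by (rule cdivmod_unique[OF assms(1,2) assms(3) assms(5)])
  ultimately show ?thesis by simp
qed

definition rho :: "nat \<Rightarrow> nat \<Rightarrow> 'r" where
  "rho i l = (if l = i then of_nat (the_enat (r i)) else if i < l \<and> l \<le> n then - e i l else 0)"

definition Jt :: "nat \<Rightarrow> nat set" where
  "Jt t = {i \<in> {1..n}. r i \<noteq> \<infinity> \<and> t < i}"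

lemma finite_Jt[simp]: "finite (Jt t)" unfolding Jt_def by simp

definition inL :: "nat \<Rightarrow> (nat \<Rightarrow> 'r) \<Rightarrow> bool" where
  "inL t z \<longleftrightarrow> (\<exists>c. \<forall>l\<in>{1..n}. z l = (\<Sum>i\<in>Jt t. c i * rho i l))"

definition agree :: "(nat \<Rightarrow> 'r) \<Rightarrow> (nat \<Rightarrow> 'r) \<Rightarrow> bool" where
  "agree x y \<longleftrightarrow> (\<forall>l\<in>{1..n}. x l = y l)"

abbreviation eqv :: "(nat \<Rightarrow> 'r) \<Rightarrow> (nat \<Rightarrow> 'r) \<Rightarrow> bool" where
  "eqv x y \<equiv> inL 0 (\<lambda>l. x l - y l)"

definition inrange :: "(nat \<Rightarrow> 'r) \<Rightarrow> bool" where
  "inrange x \<longleftrightarrow> (\<forall>k\<in>{1..n}. in_range (r k) (x k))"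

lemma inL_zero: "inL t (\<lambda>_. 0)"
  unfolding inL_def by (rule exI[of _ "\<lambda>_. 0"]) simp

lemma inL_cong: "inL t z \<Longrightarrow> agree z z' \<Longrightarrow> inL t z'"
  unfolding inL_def agree_def by auto

lemma inL_agree0: "agree z (\<lambda>_. 0) \<Longrightarrow> inL t z"
  using inL_cong[OF inL_zero] unfolding agree_def by auto

lemma inL_add: "inL t x \<Longrightarrow> inL t y \<Longrightarrow> inL t (\<lambda>l. x l + y l)"
proof -
  assume "inL t x" "inL t y"
  then obtain c d where c: "\<forall>l\<in>{1..n}. x l = (\<Sum>i\<in>Jt t. c i * rho i l)"
    and d: "\<forall>l\<in>{1..n}. y l = (\<Sum>i\<in>Jt t. d i * rho i l)" unfolding inL_def by blast
  show ?thesis unfolding inL_def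
    by (rule exI[of _ "\<lambda>i. c i + d i"]) (simp add: c d distrib_right sum.distrib)
qed

lemma inL_scale: "inL t x \<Longrightarrow> inL t (\<lambda>l. a * x l)"
proof -
  assume "inL t x"
  then obtain c where c: "\<forall>l\<in>{1..n}. x l = (\<Sum>i\<in>Jt t. c i * rho i l)" unfolding inL_def by blast
  show ?thesis unfolding inL_def
    by (rule exI[of _ "\<lambda>i. a * c i"]) (simp add: c sum_distrib_left mult.assoc)
qed

lemma inL_neg: "inL t x \<Longrightarrow> inL t (\<lambda>l. - x l)"
  using inL_scale[of t x "-1"] by simp

lemma inL_diff: "inL t x \<Longrightarrow> inL t y \<Longrightarrow> inL t (\<lambda>l. x l - y l)"
  using inL_add[of t x "\<lambda>l. - y l"] inL_neg[of t y] by simp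

lemma inL_sum: "(\<And>s. s \<in> S \<Longrightarrow> inL t (f s)) \<Longrightarrow> inL t (\<lambda>l. \<Sum>s\<in>S. f s l)"
proof (induction S rule: infinite_finite_induct)
  case (infinite A) then show ?case by (simp add: inL_zero)
next
  case empty then show ?case by (simp add: inL_zero)
next
  case (insert x F)
  then show ?case using inL_add[of t "f x" "\<lambda>l. \<Sum>s\<in>F. f s l"] by simp
qed

lemma inL_combo: "(\<And>s. s \<in> S \<Longrightarrow> inL t (f s)) \<Longrightarrow> inL t (\<lambda>l. \<Sum>s\<in>S. c s * f s l)"
  by (rule inL_sum) (rule inL_scale, blast)

lemma inL_rho: "i \<in> Jt t \<Longrightarrow> inL t (rho i)"
  unfolding inL_def
proof (rule exI[of _ "\<lambda>j. if j = i then 1 else 0"], intro ballI)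
  fix l assume "i \<in> Jt t"
  then show "rho i l = (\<Sum>j\<in>Jt t. (if j = i then 1 else 0) * rho j l)"
  proof -
    have "(\<Sum>j\<in>Jt t. (if j = i then 1 else 0) * rho j l) = (\<Sum>j\<in>Jt t. if j = i then rho j l else 0)"
      by (rule sum.cong) auto
    also have "\<dots> = rho i l" using \<open>i \<in> Jt t\<close> by (subst sum.delta) auto
    finally show ?thesis by simp
  qed
qed

lemma inL_mono: "t \<le> t' \<Longrightarrow> inL t' z \<Longrightarrow> inL t z"
proof -
  assume tt: "t \<le> t'" and "inL t' z"
  then obtain c where c: "\<forall>l\<in>{1..n}. z l = (\<Sum>i\<in>Jt t'. c i * rho i l)" unfolding inL_def by blast
  have sub: "Jt t' \<subseteq> Jt t" using tt unfolding Jt_def by auto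
  show ?thesis unfolding inL_def
  proof (rule exI[of _ "\<lambda>i. if i \<in> Jt t' then c i else 0"], intro ballI)
    fix l assume "l \<in> {1..n}"
    then have "z l = (\<Sum>i\<in>Jt t'. c i * rho i l)" using c by blast
    also have "\<dots> = (\<Sum>i\<in>Jt t. (if i \<in> Jt t' then c i else 0) * rho i l)"
      by (rule sum.mono_neutral_cong_left) (use sub in auto)
    finally show "z l = (\<Sum>i\<in>Jt t. (if i \<in> Jt t' then c i else 0) * rho i l)" .
  qed
qed

lemma eqv_refl: "eqv x x" by (simp add: inL_zero)
lemma eqv_sym: "eqv x y \<Longrightarrow> eqv y x" using inL_neg[of 0 "\<lambda>l. x l - y l"] by simp
lemma eqv_trans: "eqv x y \<Longrightarrow> eqv y z \<Longrightarrow> eqv x z"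
  using inL_add[of 0 "\<lambda>l. x l - y l" "\<lambda>l. y l - z l"] by simp
lemma eqv_agree: "agree x y \<Longrightarrow> eqv x y"
  by (rule inL_agree0) (simp add: agree_def)
lemma eqv_combo: "(\<And>s. s \<in> S \<Longrightarrow> eqv (f s) (g s)) \<Longrightarrow>
   eqv (\<lambda>l. \<Sum>s\<in>S. c s * f s l) (\<lambda>l. \<Sum>s\<in>S. c s * g s l)"
  using inL_combo[of S 0 "\<lambda>s l. f s l - g s l" c]
  by (simp add: right_diff_distrib sum_subtractf)
lemma eqv_add: "eqv x x' \<Longrightarrow> eqv y y' \<Longrightarrow> eqv (\<lambda>l. x l + y l) (\<lambda>l. x' l + y' l)"
  using inL_add[of 0 "\<lambda>l. x l - x' l" "\<lambda>l. y l - y' l"] by (simp add: algebra_simps)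
lemma eqv_diff: "eqv x x' \<Longrightarrow> eqv y y' \<Longrightarrow> eqv (\<lambda>l. x l - y l) (\<lambda>l. x' l - y' l)"
  using inL_diff[of 0 "\<lambda>l. x l - x' l" "\<lambda>l. y l - y' l"] by (simp add: algebra_simps)
lemma eqv_scale: "eqv x x' \<Longrightarrow> eqv (\<lambda>l. a * x l) (\<lambda>l. a * x' l)"
  using inL_scale[of 0 "\<lambda>l. x l - x' l" a] by (simp add: algebra_simps)
lemma eqv_subst: "eqv x y \<Longrightarrow> x = x' \<Longrightarrow> y = y' \<Longrightarrow> eqv x' y'" by simp

lemma eqv_inL: "eqv x y \<Longrightarrow> inL 0 y \<Longrightarrow> inL 0 x"
  using inL_add[of 0 "\<lambda>l. x l - y l" y] by simp

abbreviation step where "step \<equiv> reduce_step n r e"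
abbreviation R where "R \<equiv> reduce_vec n r e"

lemma step_inf: "r k = \<infinity> \<Longrightarrow> step k x = x"
  unfolding reduce_step_def by simp

lemma step_fin: "r k = enat m \<Longrightarrow> step k x = (\<lambda>l. if l = k then snd (cdivmod (x k) m)
    else if k < l \<and> l \<le> n then x l + fst (cdivmod (x k) m) * e k l else x l)"
  unfolding reduce_step_def by (simp add: split_def Let_def)

lemma step_low: "l < k \<Longrightarrow> step k x l = x l"
  by (cases "r k") (auto simp: step_inf step_fin)

lemma step_fix: "k \<in> {1..n} \<Longrightarrow> in_range (r k) (x k) \<Longrightarrow> step k x = x"
proof (cases "r k")
  case (enat m)
  assume k: "k \<in> {1..n}" "in_range (r k) (x k)"
  then have xin: "x k \<in> of_nat ` {0..<m}" using enat by (simp add: in_range_def)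
  have "cdivmod (x k) m = (0, x k)" by (rule cdivmod_unique[OF k(1) enat _ xin]) simp
  then show ?thesis using enat by (simp add: step_fin fun_eq_iff)
qed (simp add: step_inf)

lemma step_range: "k \<in> {1..n} \<Longrightarrow> in_range (r k) (step k x k)"
proof (cases "r k")
  case (enat m)
  assume k: "k \<in> {1..n}"
  show ?thesis using cdivmod_prop[OF k enat, of "x k"] enat by (simp add: step_fin in_range_def)
qed (simp add: in_range_def)

lemma step_diff: "k \<in> {1..n} \<Longrightarrow> t < k \<Longrightarrow> inL t (\<lambda>l. x l - step k x l)"
proof (cases "r k")
  case infinity
  then show ?thesis by (simp add: step_inf inL_zero)
next
  case (enat m)
  assume k: "k \<in> {1..n}" "t < k"
  define q where "q = fst (cdivmod (x k) m)"
  have xk: "x k = of_nat m * q + snd (cdivmod (x k) m)" using cdivmod_prop[OF k(1) enat] q_def by blast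
  have kJ: "k \<in> Jt t" using k enat unfolding Jt_def by auto
  have "inL t (\<lambda>l. q * rho k l)" by (rule inL_scale, rule inL_rho[OF kJ])
  moreover have "agree (\<lambda>l. q * rho k l) (\<lambda>l. x l - step k x l)"
    unfolding agree_def
  proof
    fix l assume "l \<in> {1..n}"
    show "q * rho k l = x l - step k x l"
      using enat xk by (auto simp: step_fin rho_def q_def algebra_simps)
  qed
  ultimately show ?thesis by (rule inL_cong)
qed

lemma fold_step:
  "\<forall>x. (\<forall>k. 1 \<le> k \<and> k \<le> t \<longrightarrow> x k = 0) \<longrightarrow> (\<forall>k\<in>set ks. k \<in> {1..n}) \<longrightarrow>
     (\<forall>k. 1 \<le> k \<and> k \<le> t \<longrightarrow> fold step ks x k = 0) \<and> inL t (\<lambda>l. x l - fold step ks x l)"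
proof (induction ks)
  case Nil
  then show ?case by (simp add: inL_zero)
next
  case (Cons k ks)
  show ?case
  proof (intro allI impI)
    fix x :: "nat \<Rightarrow> 'r"
    assume z: "\<forall>k. 1 \<le> k \<and> k \<le> t \<longrightarrow> x k = 0" and ks: "\<forall>k'\<in>set (k # ks). k' \<in> {1..n}"
    have k: "k \<in> {1..n}" using ks by simp
    show "(\<forall>k'. 1 \<le> k' \<and> k' \<le> t \<longrightarrow> fold step (k # ks) x k' = 0) \<and>
          inL t (\<lambda>l. x l - fold step (k # ks) x l)"
    proof (cases "k \<le> t")
      case True
      have "x k = 0" using z k True by auto
      then have "in_range (r k) (x k)" using m_pos[OF k]
        by (cases "r k") (auto simp: in_range_def intro: image_eqI[of 0 _ 0])
      then have "step k x = x" using step_fix k by blast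
      then show ?thesis using Cons.IH z ks by simp
    next
      case False
      have z': "\<forall>k'. 1 \<le> k' \<and> k' \<le> t \<longrightarrow> step k x k' = 0" using z False step_low by auto
      have d1: "inL t (\<lambda>l. x l - step k x l)" using step_diff k False by simp
      have IH: "(\<forall>k'. 1 \<le> k' \<and> k' \<le> t \<longrightarrow> fold step ks (step k x) k' = 0) \<and>
          inL t (\<lambda>l. step k x l - fold step ks (step k x) l)" using Cons.IH z' ks by simp
      show ?thesis using IH inL_add[OF d1 conjunct2[OF IH]] by simp
    qed
  qed
qed

lemma reduce_diff_low: "(\<And>k. 1 \<le> k \<and> k \<le> t \<Longrightarrow> x k = 0) \<Longrightarrow> inL t (\<lambda>l. x l - R x l)"
  using fold_step[of t "[1..<Suc n]"] unfolding reduce_vec_def by auto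

lemma reduce_eqv: "eqv x (R x)"
  using reduce_diff_low[of 0 x] by simp

lemma fold_range: "m \<le> n \<Longrightarrow> \<forall>k\<in>{1..m}. in_range (r k) (fold step [1..<Suc m] x k)"
proof (induction m)
  case 0 then show ?case by simp
next
  case (Suc m)
  have eq: "fold step [1..<Suc (Suc m)] x = step (Suc m) (fold step [1..<Suc m] x)" by simp
  show ?case
  proof
    fix k assume k: "k \<in> {1..Suc m}"
    show "in_range (r k) (fold step [1..<Suc (Suc m)] x k)"
    proof (cases "k = Suc m")
      case True
      then show ?thesis unfolding eq using step_range Suc.prems by simp
    next
      case False
      then have "k < Suc m" using k by simp
      then show ?thesis unfolding eq using step_low Suc k False by simp
    qed
  qed
qed

lemma reduce_range: "inrange (R x)"
  using fold_range[of n x] unfolding inrange_def reduce_vec_def by simp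

lemma range_unique:
  assumes x: "inrange x" and y: "inrange y" and L: "eqv x y"
  shows "agree x y"
proof -
  from L obtain c where c: "\<forall>l\<in>{1..n}. x l - y l = (\<Sum>i\<in>Jt 0. c i * rho i l)" unfolding inL_def by blast
  have "\<forall>l. l \<in> {1..n} \<longrightarrow> x l = y l \<and> (l \<in> Jt 0 \<longrightarrow> c l = 0)" for l0
  proof (intro allI)
    fix l show "l \<in> {1..n} \<longrightarrow> x l = y l \<and> (l \<in> Jt 0 \<longrightarrow> c l = 0)"
    proof (induction l rule: less_induct)
      case (less l)
      show ?case
      proof
        assume l: "l \<in> {1..n}"
        have "(\<Sum>i\<in>Jt 0. c i * rho i l) = (\<Sum>i\<in>Jt 0 \<inter> {l}. c i * rho i l)"
        proof (rule sum.mono_neutral_right)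
          show "\<forall>i\<in>Jt 0 - Jt 0 \<inter> {l}. c i * rho i l = 0"
          proof
            fix i assume i: "i \<in> Jt 0 - Jt 0 \<inter> {l}"
            show "c i * rho i l = 0"
            proof (cases "i < l")
              case True
              then have "c i = 0" using less.IH[of i] i unfolding Jt_def by auto
              then show ?thesis by simp
            next
              case False
              then show ?thesis using i by (auto simp: rho_def)
            qed
          qed
        qed auto
        then have xl: "x l - y l = (if l \<in> Jt 0 then c l * of_nat (the_enat (r l)) else 0)"
          using c l by (auto simp: rho_def)
        show "x l = y l \<and> (l \<in> Jt 0 \<longrightarrow> c l = 0)"
        proof (cases "l \<in> Jt 0")
          case False then show ?thesis using xl by simp
        next
          case True
          then obtain m where m: "r l = enat m" unfolding Jt_def by auto
          have "in_range (r l) (x l)" "in_range (r l) (y l)"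
            using x y l unfolding inrange_def by auto
          then have "x l \<in> of_nat ` {0..<m}" "y l \<in> of_nat ` {0..<m}"
            using m unfolding in_range_def by auto
          moreover have "of_nat m * 0 + x l = of_nat m * c l + y l"
            using xl True m by (simp add: algebra_simps)
          ultimately have "0 = c l \<and> x l = y l" using div_unique[OF l m] by blast
          then show ?thesis by simp
        qed
      qed
    qed
  qed
  then show ?thesis unfolding agree_def by blast
qed

lemma R_agree_iff: "agree (R x) (R y) \<longleftrightarrow> eqv x y"
proof
  assume a: "agree (R x) (R y)"
  show "eqv x y"
    using eqv_trans[OF reduce_eqv eqv_trans[OF eqv_agree[OF a] eqv_sym[OF reduce_eqv]]] .
next
  assume "eqv x y"
  then show "agree (R x) (R y)"
    by (intro range_unique reduce_range eqv_trans[OF eqv_sym[OF reduce_eqv]] eqv_trans[OF _ reduce_eqv])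
qed

end



lemma adm_exists: "admissible_weight n r e b (\<lambda>k. 2 ^ k)"
proof -
  have "(2::nat) ^ i + 2 ^ j \<le> 2 ^ k" if "max i j < k" for i j k :: nat
  proof -
    have "(2::nat) ^ i \<le> 2 ^ (k - 1)" "(2::nat) ^ j \<le> 2 ^ (k - 1)"
      using that by (auto intro!: power_increasing)
    moreover have "(2::nat) ^ k = 2 * 2 ^ (k - 1)" using that
      by (metis Suc_diff_1 gr_implies_not0 not_gr0 power_Suc)
    ultimately show ?thesis by linarith
  qed
  moreover have "(2::nat) ^ i \<le> 2 ^ k" if "i < k" for i k :: nat
    using that by (auto intro!: power_increasing)
  ultimately show ?thesis unfolding admissible_weight_def by auto
qed

lemma weight_adm: "admissible_weight n r e b (weight n r e b)"
proof -
  define A where "A = admissible_weight n r e b"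
  define w0 where "w0 k = (if k \<in> {1..n} then (LEAST m. \<exists>w'. A w' \<and> w' k = m) else 0)" for k
  have A2: "A (\<lambda>k. 2 ^ k)" unfolding A_def by (rule adm_exists)
  have least: "\<exists>w'. A w' \<and> w' k = w0 k" if "k \<in> {1..n}" for k
  proof -
    have "\<exists>m. \<exists>w'. A w' \<and> w' k = m" using A2 by blast
    from LeastI_ex[OF this] show ?thesis unfolding w0_def using that by simp
  qed
  have le: "w0 k \<le> w' k" if "k \<in> {1..n}" "A w'" for k w'
  proof -
    have "(LEAST m. \<exists>w'. A w' \<and> w' k = m) \<le> w' k" by (rule Least_le) (use that in blast)
    then show ?thesis unfolding w0_def using that by simp
  qed
  have adm: "A w0"
    unfolding A_def admissible_weight_def
  proof (intro conjI ballI allI impI)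
    fix k assume k: "k \<in> {1..n}"
    obtain w' where "A w'" "w' k = w0 k" using least[OF k] by blast
    moreover have "1 \<le> w' k" using k \<open>A w'\<close> unfolding A_def admissible_weight_def by auto
    ultimately show "1 \<le> w0 k" by simp
  next
    fix i k assume i: "i \<in> {1..n}" and h: "r i \<noteq> \<infinity> \<and> i < k \<and> k \<le> n \<and> e i k \<noteq> 0"
    then have k: "k \<in> {1..n}" by auto
    obtain w' where w': "A w'" "w' k = w0 k" using least[OF k] by blast
    have "w0 i \<le> w' i" using le[OF i w'(1)] .
    also have "w' i \<le> w' k" using w'(1) i h unfolding A_def admissible_weight_def by blast
    finally show "w0 i \<le> w0 k" using w'(2) by simp
  next
    fix i j k assume i: "i \<in> {1..n}" and j: "j \<in> {1..n}" and h: "max i j < k \<and> k \<le> n \<and> b i j k \<noteq> 0"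
    then have k: "k \<in> {1..n}" by auto
    obtain w' where w': "A w'" "w' k = w0 k" using least[OF k] by blast
    have "w0 i + w0 j \<le> w' i + w' j" using le[OF i w'(1)] le[OF j w'(1)] by simp
    also have "w' i + w' j \<le> w' k" using w'(1) i j h unfolding A_def admissible_weight_def by blast
    finally show "w0 i + w0 j \<le> w0 k" using w'(2) by simp
  qed
  have "weight n r e b = w0"
    unfolding weight_def
  proof (rule the_equality)
    show "admissible_weight n r e b w0 \<and> (\<forall>w'. admissible_weight n r e b w' \<longrightarrow> (\<forall>k\<in>{1..n}. w0 k \<le> w' k)) \<and>
      (\<forall>k. k \<notin> {1..n} \<longrightarrow> w0 k = 0)"
      using adm le unfolding A_def w0_def by auto
  next
    fix w assume h: "admissible_weight n r e b w \<and> (\<forall>w'. admissible_weight n r e b w' \<longrightarrow> (\<forall>k\<in>{1..n}. w k \<le> w' k)) \<and>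
      (\<forall>k. k \<notin> {1..n} \<longrightarrow> w k = 0)"
    show "w = w0"
    proof
      fix k show "w k = w0 k"
      proof (cases "k \<in> {1..n}")
        case True
        have "w k \<le> w0 k" using h adm True unfolding A_def by blast
        moreover have "w0 k \<le> w k" using le[OF True] h unfolding A_def by blast
        ultimately show ?thesis by simp
      next
        case False then show ?thesis using h unfolding w0_def by (simp only: if_False) blast
      qed
    qed
  qed
  then show ?thesis using adm unfolding A_def by simp
qed

lemma sum_if_left: "finite A \<Longrightarrow> (\<Sum>i\<in>A. (if i = k then 1 else 0) * (f i :: 'a::comm_ring_1)) = (if k \<in> A then f k else 0)"
proof -
  assume "finite A"
  have "(\<Sum>i\<in>A. (if i = k then 1 else 0) * f i) = (\<Sum>i\<in>A. if i = k then f i else 0)"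
    by (rule sum.cong) auto
  also have "\<dots> = (if k \<in> A then f k else 0)" using \<open>finite A\<close> by (simp add: sum.delta)
  finally show ?thesis .
qed

lemma sum_if_right: "finite A \<Longrightarrow> (\<Sum>i\<in>A. (f i :: 'a::comm_ring_1) * (if k = i then 1 else 0)) = (if k \<in> A then f k else 0)"
proof -
  assume "finite A"
  have "(\<Sum>i\<in>A. f i * (if k = i then 1 else 0)) = (\<Sum>i\<in>A. if k = i then f i else 0)"
    by (rule sum.cong) auto
  also have "\<dots> = (if k \<in> A then f k else 0)" using \<open>finite A\<close> by (simp add: sum.delta)
  finally show ?thesis .
qed

context pres begin

definition beta :: "nat \<Rightarrow> nat \<Rightarrow> nat \<Rightarrow> 'r" where
  "beta i k l = (if max i k < l \<and> l \<le> n then b i k l else 0)"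

definition P :: "(nat \<Rightarrow> 'r) \<Rightarrow> (nat \<Rightarrow> 'r) \<Rightarrow> nat \<Rightarrow> 'r" where
  "P x y = (\<lambda>l. \<Sum>i\<in>{1..n}. y i * mul_gen_vec n b x i l)"

abbreviation u :: "nat \<Rightarrow> nat \<Rightarrow> 'r" where "u \<equiv> unit_vec"

lemma mgv_eq: "mul_gen_vec n b x i l = (\<Sum>k\<in>{1..n}. x k * beta i k l)"
  unfolding mul_gen_vec_def beta_def by simp

lemma P_expand: "P x y l = (\<Sum>i\<in>{1..n}. \<Sum>k\<in>{1..n}. y i * x k * beta i k l)"
  unfolding P_def mgv_eq by (simp add: sum_distrib_left mult.assoc)

lemma P_cong: "agree x x' \<Longrightarrow> agree y y' \<Longrightarrow> P x y = P x' y'"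
  unfolding agree_def by (auto simp: fun_eq_iff P_expand intro!: sum.cong)

lemma P_cong_left: "agree x x' \<Longrightarrow> P x y = P x' y"
  by (rule P_cong) (auto simp: agree_def)
lemma P_cong_right: "agree y y' \<Longrightarrow> P x y = P x y'"
  by (rule P_cong) (auto simp: agree_def)

lemma P_sum_left: "P (\<lambda>l. \<Sum>s\<in>S. c s * v s l) y = (\<lambda>l. \<Sum>s\<in>S. c s * P (v s) y l)"
proof
  fix l
  have "P (\<lambda>l. \<Sum>s\<in>S. c s * v s l) y l = (\<Sum>i\<in>{1..n}. \<Sum>k\<in>{1..n}. \<Sum>s\<in>S. c s * (y i * v s k * beta i k l))"
    unfolding P_expand by (simp add: sum_distrib_left sum_distrib_right mult_ac)
  also have "\<dots> = (\<Sum>i\<in>{1..n}. \<Sum>s\<in>S. \<Sum>k\<in>{1..n}. c s * (y i * v s k * beta i k l))"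
    by (rule sum.cong[OF refl], rule sum.swap)
  also have "\<dots> = (\<Sum>s\<in>S. \<Sum>i\<in>{1..n}. \<Sum>k\<in>{1..n}. c s * (y i * v s k * beta i k l))"
    by (rule sum.swap)
  also have "\<dots> = (\<Sum>s\<in>S. c s * P (v s) y l)"
    unfolding P_expand by (simp add: sum_distrib_left)
  finally show "P (\<lambda>l. \<Sum>s\<in>S. c s * v s l) y l = (\<Sum>s\<in>S. c s * P (v s) y l)" .
qed

lemma P_sum_right: "P x (\<lambda>l. \<Sum>s\<in>S. c s * v s l) = (\<lambda>l. \<Sum>s\<in>S. c s * P x (v s) l)"
proof
  fix l
  have "P x (\<lambda>l. \<Sum>s\<in>S. c s * v s l) l = (\<Sum>i\<in>{1..n}. \<Sum>s\<in>S. c s * (v s i * mul_gen_vec n b x i l))"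
    unfolding P_def by (simp add: sum_distrib_left sum_distrib_right mult_ac)
  also have "\<dots> = (\<Sum>s\<in>S. \<Sum>i\<in>{1..n}. c s * (v s i * mul_gen_vec n b x i l))"
    by (rule sum.swap)
  also have "\<dots> = (\<Sum>s\<in>S. c s * P x (v s) l)"
    unfolding P_def by (simp add: sum_distrib_left)
  finally show "P x (\<lambda>l. \<Sum>s\<in>S. c s * v s l) l = (\<Sum>s\<in>S. c s * P x (v s) l)" .
qed

lemma decomp: "agree x (\<lambda>l. \<Sum>k\<in>{1..n}. x k * u k l)"
  unfolding agree_def unit_vec_def by (simp add: sum_if_right)

lemma P_expand_left: "P x y = (\<lambda>l. \<Sum>k\<in>{1..n}. x k * P (u k) y l)"
  using P_cong_left[OF decomp, of x y] P_sum_left[of x u "{1..n}" y] by simp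

lemma P_expand_right: "P x y = (\<lambda>l. \<Sum>i\<in>{1..n}. y i * P x (u i) l)"
  using P_cong_right[OF decomp, of x y] P_sum_right[of x y u "{1..n}"] by simp

lemma P_unit_right: "i \<in> {1..n} \<Longrightarrow> P x (u i) = mul_gen_vec n b x i"
  unfolding P_def unit_vec_def by (simp add: sum_if_left)

lemma P_unit_unit: "k \<in> {1..n} \<Longrightarrow> i \<in> {1..n} \<Longrightarrow> P (u k) (u i) l = beta i k l"
  by (simp add: P_unit_right mgv_eq) (simp add: unit_vec_def sum_if_left)

lemma P_diff_left: "P (\<lambda>l. x l - x' l) y = (\<lambda>l. P x y l - P x' y l)"
  by (simp add: fun_eq_iff P_expand algebra_simps sum_subtractf)
lemma P_diff_right: "P x (\<lambda>l. y l - y' l) = (\<lambda>l. P x y l - P x y' l)"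
  by (simp add: fun_eq_iff P_expand algebra_simps sum_subtractf)
lemma P_scale_left: "P (\<lambda>l. a * x l) y = (\<lambda>l. a * P x y l)"
  by (simp add: fun_eq_iff P_expand sum_distrib_left mult_ac)
lemma P_scale_right: "P x (\<lambda>l. a * y l) = (\<lambda>l. a * P x y l)"
  by (simp add: fun_eq_iff P_expand sum_distrib_left mult_ac)

lemma P_outside: "l \<notin> {1..n} \<Longrightarrow> P x y l = 0"
  unfolding P_expand beta_def by (intro sum.neutral ballI) auto

abbreviation W where "W \<equiv> weight n r e b"
abbreviation d where "d \<equiv> max_weight n r e b"

definition hw :: "nat \<Rightarrow> (nat \<Rightarrow> 'r) \<Rightarrow> bool" where
  "hw m x \<longleftrightarrow> (\<forall>l\<in>{1..n}. x l \<noteq> 0 \<longrightarrow> m \<le> W l)"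

lemma W_le_d: "l \<in> {1..n} \<Longrightarrow> W l \<le> d"
  unfolding max_weight_def by (rule Max_ge) auto

lemma hw_big: "hw m x \<Longrightarrow> d < m \<Longrightarrow> agree x (\<lambda>_. 0)"
  unfolding hw_def agree_def using W_le_d by force

lemma hw_P: assumes "hw m x" "hw m' y" shows "hw (m + m') (P x y)"
  unfolding hw_def
proof (intro ballI impI)
  fix l assume l: "l \<in> {1..n}" and nz: "P x y l \<noteq> 0"
  then obtain i where i: "i \<in> {1..n}" and nz1: "(\<Sum>k\<in>{1..n}. y i * x k * beta i k l) \<noteq> 0"
    unfolding P_expand by (meson sum.not_neutral_contains_not_neutral)
  then obtain k where k: "k \<in> {1..n}" and nz2: "y i * x k * beta i k l \<noteq> 0"
    by (meson sum.not_neutral_contains_not_neutral)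
  have yi: "y i \<noteq> 0" and xk: "x k \<noteq> 0" and bt: "beta i k l \<noteq> 0" using nz2 by auto
  have "m' \<le> W i" using assms(2) i yi unfolding hw_def by blast
  moreover have "m \<le> W k" using assms(1) k xk unfolding hw_def by blast
  moreover have "W i + W k \<le> W l"
    using weight_adm[of n r e b] i k bt unfolding admissible_weight_def beta_def
    by (auto split: if_splits)
  ultimately show "m + m' \<le> W l" by simp
qed

lemma hw_unit: "hw (W i) (u i)"
  unfolding hw_def unit_vec_def by auto

lemma hw_rho: assumes "i \<in> {1..n}" "r i \<noteq> \<infinity>" shows "hw (W i) (rho i)"
  unfolding hw_def
proof (intro ballI impI)
  fix l assume l: "l \<in> {1..n}" and nz: "rho i l \<noteq> 0"
  show "W i \<le> W l"
  proof (cases "l = i")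
    case False
    then have "i < l \<and> l \<le> n \<and> e i l \<noteq> 0" using nz by (auto simp: rho_def split: if_splits)
    then show ?thesis using weight_adm[of n r e b] assms unfolding admissible_weight_def by blast
  qed simp
qed

end



lemma lookup_gen: "Poly_Mapping.lookup (gen k :: 'r::comm_ring_1 falg) w = (if w = [k] then 1 else 0)"
  unfolding gen_def by (simp add: lookup_single when_def)

lemma lookup_lin: "Poly_Mapping.lookup (lin n x) w = (if \<exists>m\<in>{1..n}. w = [m] then x (hd w) else 0)"
proof -
  have "Poly_Mapping.lookup (lin n x) w = (\<Sum>k\<in>{1..n}. x k * (if w = [k] then 1 else 0))"
    unfolding lin_def lookup_sum lookup_smul lookup_gen ..
  also have "\<dots> = (if \<exists>m\<in>{1..n}. w = [m] then x (hd w) else 0)"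
  proof (cases "\<exists>m\<in>{1..n}. w = [m]")
    case True
    then obtain m where m: "m \<in> {1..n}" "w = [m]" by blast
    have "(\<Sum>k\<in>{1..n}. x k * (if w = [k] then 1 else 0)) = (\<Sum>k\<in>{1..n}. x k * (if m = k then 1 else 0))"
      using m by (intro sum.cong) auto
    then show ?thesis using m by (simp add: sum_if_right)
  next
    case False
    then show ?thesis by (intro trans[OF sum.neutral]) auto
  qed
  finally show ?thesis .
qed

context pres begin

lemma lin_agree: "agree x y \<Longrightarrow> lin n x = lin n y"
  unfolding lin_def agree_def by (intro sum.cong) auto

lemma lin_inj: "lin n x = lin n y \<Longrightarrow> agree x y"
  unfolding agree_def
proof
  fix l assume h: "lin n x = lin n y" and l: "l \<in> {1..n}"
  have "Poly_Mapping.lookup (lin n x) [l] = Poly_Mapping.lookup (lin n y) [l]" using h by simp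
  then show "x l = y l" using l by (simp add: lookup_lin)
qed

lemma lin_sum: "lin n (\<lambda>l. \<Sum>s\<in>S. c s * v s l) = (\<Sum>s\<in>S. smul (c s) (lin n (v s)))"
  by (rule poly_mapping_eqI) (auto simp: lookup_lin lookup_sum lookup_smul sum.neutral)

lemma lin_diff: "lin n (\<lambda>l. x l - y l) = lin n x - lin n y"
  by (rule poly_mapping_eqI) (auto simp: lookup_lin lookup_minus)

lemma lin_scale: "lin n (\<lambda>l. a * x l) = smul a (lin n x)"
  by (rule poly_mapping_eqI) (auto simp: lookup_lin lookup_smul)

lemma gen_lin: "k \<in> {1..n} \<Longrightarrow> gen k = lin n (u k)"
  by (rule poly_mapping_eqI) (auto simp: lookup_lin lookup_gen unit_vec_def)

abbreviation cw where "cw \<equiv> collect_word n r e b"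

definition Phi :: "'r falg \<Rightarrow> nat \<Rightarrow> 'r" where
  "Phi f = (\<lambda>l. \<Sum>w\<in>Poly_Mapping.keys f. Poly_Mapping.lookup f w * cw w l)"

lemma coll_eq: "collection n r e b f = lin n (R (Phi f))"
  unfolding collection_def Phi_def ..

lemma Phi_superset: "finite S \<Longrightarrow> Poly_Mapping.keys f \<subseteq> S \<Longrightarrow>
    Phi f = (\<lambda>l. \<Sum>w\<in>S. Poly_Mapping.lookup f w * cw w l)"
  unfolding Phi_def by (auto intro!: sum.mono_neutral_left simp: in_keys_iff)

lemma Phi_add: "Phi (f + g) = (\<lambda>l. Phi f l + Phi g l)"
proof -
  let ?S = "Poly_Mapping.keys f \<union> Poly_Mapping.keys g \<union> Poly_Mapping.keys (f + g)"
  have "finite ?S" by simp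
  then show ?thesis
    by (subst (1 2 3) Phi_superset[where S = ?S]) (auto simp: lookup_add distrib_right sum.distrib)
qed

lemma Phi_smul: "Phi (smul c f) = (\<lambda>l. c * Phi f l)"
  by (subst (1 2) Phi_superset[where S = "Poly_Mapping.keys f"])
     (auto simp: keys_smul lookup_smul sum_distrib_left mult.assoc)

lemma Phi_zero: "Phi 0 = (\<lambda>_. 0)"
  unfolding Phi_def by simp

lemma Phi_minus: "Phi (- f) = (\<lambda>l. - Phi f l)"
  using Phi_smul[of "-1" f] by (simp add: smul_minus_one)

lemma Phi_diff: "Phi (f - g) = (\<lambda>l. Phi f l - Phi g l)"
  by (simp only: diff_conv_add_uminus Phi_add Phi_minus)

lemma Phi_sum: "Phi (sum F S) = (\<lambda>l. \<Sum>s\<in>S. Phi (F s) l)"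
  by (induction S rule: infinite_finite_induct) (auto simp: Phi_zero Phi_add)

lemma Phi_single: "Phi (Poly_Mapping.single w a) = (\<lambda>l. a * cw w l)"
  by (subst Phi_superset[where S = "{w}"]) auto

lemma Phi_gen: "Phi (gen k) = cw [k]"
  unfolding gen_def Phi_single by simp

lemma cw1: "cw [k] = R (u k)" by simp
lemma cw2: "cw [k, i] = R (R (mul_gen_vec n b (u k) i))" by simp

lemma eqv_cw1: "eqv (cw [k]) (u k)"
  unfolding cw1 by (rule eqv_sym[OF reduce_eqv])

lemma eqv_cw2: "i \<in> {1..n} \<Longrightarrow> eqv (cw [k, i]) (P (u k) (u i))"
  unfolding cw2 P_unit_right
  by (rule eqv_sym, rule eqv_trans[OF reduce_eqv reduce_eqv])

lemma Phi_lin: "Phi (lin n x) = (\<lambda>l. \<Sum>k\<in>{1..n}. x k * cw [k] l)"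
  unfolding lin_def Phi_sum Phi_smul Phi_gen ..

lemma Phi_lin_eqv: "eqv (Phi (lin n x)) x"
proof -
  have "eqv (Phi (lin n x)) (\<lambda>l. \<Sum>k\<in>{1..n}. x k * u k l)"
    unfolding Phi_lin by (rule eqv_combo) (rule eqv_cw1)
  then show ?thesis by (rule eqv_trans[OF _ eqv_sym[OF eqv_agree[OF decomp]]])
qed

lemma fmul_gen_gen: "fmul (gen k) (gen i) = Poly_Mapping.single [k, i] 1"
  unfolding gen_def fmul_single by simp

lemma Phi_fmul_lin: "eqv (Phi (fmul (lin n x) (lin n y))) (P x y)"
proof -
  have "fmul (lin n x) (lin n y) = (\<Sum>i\<in>{1..n}. smul (y i) (\<Sum>k\<in>{1..n}. smul (x k) (fmul (gen k) (gen i))))"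
    unfolding lin_def fmul_sum_left fmul_sum_right fmul_smul_left fmul_smul_right ..
  then have "Phi (fmul (lin n x) (lin n y)) = (\<lambda>l. \<Sum>i\<in>{1..n}. y i * (\<Sum>k\<in>{1..n}. x k * cw [k, i] l))"
    by (simp add: Phi_sum Phi_smul fmul_gen_gen Phi_single)
  moreover have "eqv (\<lambda>l. \<Sum>i\<in>{1..n}. y i * (\<Sum>k\<in>{1..n}. x k * cw [k, i] l))
                     (\<lambda>l. \<Sum>i\<in>{1..n}. y i * (\<Sum>k\<in>{1..n}. x k * P (u k) (u i) l))" (is "eqv ?a ?b")
  proof (rule eqv_combo[where f = "\<lambda>i l. \<Sum>k\<in>{1..n}. x k * cw [k, i] l"
                         and g = "\<lambda>i l. \<Sum>k\<in>{1..n}. x k * P (u k) (u i) l"])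
    fix i assume i: "i \<in> {1..n}"
    show "eqv (\<lambda>l. \<Sum>k\<in>{1..n}. x k * cw [k, i] l) (\<lambda>l. \<Sum>k\<in>{1..n}. x k * P (u k) (u i) l)"
      by (rule eqv_combo[where f = "\<lambda>k. cw [k, i]" and g = "\<lambda>k. P (u k) (u i)"]) (rule eqv_cw2[OF i])
  qed
  moreover have "(\<lambda>l. \<Sum>i\<in>{1..n}. y i * (\<Sum>k\<in>{1..n}. x k * P (u k) (u i) l)) = P x y"
    by (subst (2) P_expand_right) (simp add: P_expand_left[of x "u _"])
  ultimately show ?thesis by (metis eqv_subst)
qed

abbreviation I where "I \<equiv> pres_ideal n r e b"

lemma I_zero: "0 \<in> I" unfolding pres_ideal_def by (rule ideal_gen.zero)
lemma I_add: "x \<in> I \<Longrightarrow> y \<in> I \<Longrightarrow> x + y \<in> I" unfolding pres_ideal_def by (rule ideal_gen.add)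
lemma I_smul: "x \<in> I \<Longrightarrow> smul c x \<in> I" unfolding pres_ideal_def by (rule ideal_gen.scal)
lemma I_neg: "x \<in> I \<Longrightarrow> - x \<in> I" using I_smul[of x "-1"] by (simp add: smul_minus_one)
lemma I_diff: "x \<in> I \<Longrightarrow> y \<in> I \<Longrightarrow> x - y \<in> I" by (simp only: diff_conv_add_uminus I_add I_neg)
lemma I_sum: "(\<And>s. s \<in> S \<Longrightarrow> F s \<in> I) \<Longrightarrow> sum F S \<in> I"
  by (induction S rule: infinite_finite_induct) (auto simp: I_zero I_add)
lemma I_fmul_left: "x \<in> I \<Longrightarrow> in_F n f \<Longrightarrow> fmul f x \<in> I"
  unfolding pres_ideal_def by (rule ideal_gen.mult_left)
lemma I_fmul_right: "x \<in> I \<Longrightarrow> in_F n f \<Longrightarrow> fmul x f \<in> I"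
  unfolding pres_ideal_def by (rule ideal_gen.mult_right)
lemma I_power: "i \<in> {1..n} \<Longrightarrow> r i \<noteq> \<infinity> \<Longrightarrow> power_rel n r e i \<in> I"
  unfolding pres_ideal_def relations_def by (rule ideal_gen.base) blast
lemma I_prod: "i \<in> {1..n} \<Longrightarrow> j \<in> {1..n} \<Longrightarrow> product_rel n b i j \<in> I"
  unfolding pres_ideal_def relations_def by (rule ideal_gen.base) blast
lemma I_trans: "a - b' \<in> I \<Longrightarrow> b' - c \<in> I \<Longrightarrow> a - c \<in> I"
  using I_add[of "a - b'" "b' - c"] by simp

lemma lin_rho: "i \<in> {1..n} \<Longrightarrow> lin n (rho i) = power_rel n r e i"
proof (rule poly_mapping_eqI)
  fix w assume i: "i \<in> {1..n}"
  have s: "(\<Sum>k\<in>{i<..n}. e i k * (if w = [k] then 1 else 0)) =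
        (if \<exists>m\<in>{i<..n}. w = [m] then e i (hd w) else 0)"
  proof (cases "\<exists>m\<in>{i<..n}. w = [m]")
    case True
    then obtain m where m: "m \<in> {i<..n}" "w = [m]" by blast
    have "(\<Sum>k\<in>{i<..n}. e i k * (if w = [k] then 1 else 0)) = (\<Sum>k\<in>{i<..n}. e i k * (if m = k then 1 else 0))"
      using m by (intro sum.cong) auto
    then show ?thesis using m by (simp add: sum_if_right)
  next
    case False
    then show ?thesis by (intro trans[OF sum.neutral]) auto
  qed
  show "Poly_Mapping.lookup (lin n (rho i)) w = Poly_Mapping.lookup (power_rel n r e i) w"
    unfolding power_rel_def lookup_minus lookup_sum lookup_smul lookup_gen lookup_lin s
    using i by (auto simp: rho_def)
qed

lemma step_diff_vec: "k \<in> {1..n} \<Longrightarrow> r k = enat m \<Longrightarrow>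
   (\<lambda>l. x l - step k x l) = (\<lambda>l. fst (cdivmod (x k) m) * rho k l)"
proof
  fix l assume k: "k \<in> {1..n}" and m: "r k = enat m"
  have xk: "x k = of_nat m * fst (cdivmod (x k) m) + snd (cdivmod (x k) m)" using cdivmod_prop[OF k m] by blast
  show "x l - step k x l = fst (cdivmod (x k) m) * rho k l"
    using m xk by (auto simp: step_fin rho_def algebra_simps)
qed

lemma lin_step: "k \<in> {1..n} \<Longrightarrow> lin n x - lin n (step k x) \<in> I"
proof (cases "r k")
  case infinity then show ?thesis by (simp add: step_inf I_zero)
next
  case (enat m)
  assume k: "k \<in> {1..n}"
  have "lin n x - lin n (step k x) = lin n (\<lambda>l. x l - step k x l)" by (simp add: lin_diff)
  also have "\<dots> = smul (fst (cdivmod (x k) m)) (power_rel n r e k)"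
    unfolding step_diff_vec[OF k enat] lin_scale lin_rho[OF k] ..
  finally show ?thesis using I_smul I_power[OF k] enat by simp
qed

lemma lin_fold: "\<forall>x. (\<forall>k\<in>set ks. k \<in> {1..n}) \<longrightarrow> lin n x - lin n (fold step ks x) \<in> I"
proof (induction ks)
  case Nil then show ?case by (simp add: I_zero)
next
  case (Cons k ks)
  show ?case
  proof (intro allI impI)
    fix x :: "nat \<Rightarrow> 'r" assume ks: "\<forall>k'\<in>set (k # ks). k' \<in> {1..n}"
    have "lin n x - lin n (step k x) \<in> I" using lin_step ks by simp
    moreover have "lin n (step k x) - lin n (fold step ks (step k x)) \<in> I" using Cons.IH ks by simp
    ultimately show "lin n x - lin n (fold step (k # ks) x) \<in> I" using I_trans by simp
  qed
qed

lemma lin_R: "lin n x - lin n (R x) \<in> I"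
proof -
  have h: "\<forall>k\<in>set [1..<Suc n]. k \<in> {1..n}" by auto
  show ?thesis unfolding reduce_vec_def using lin_fold[of "[1..<Suc n]"] h by blast
qed

lemma lin_beta: "j \<in> {1..n} \<Longrightarrow> k \<in> {1..n} \<Longrightarrow>
   lin n (beta j k) = (\<Sum>l\<in>{max j k<..n}. smul (b j k l) (gen l))"
proof (rule poly_mapping_eqI)
  fix w assume j: "j \<in> {1..n}" and k: "k \<in> {1..n}"
  have s: "(\<Sum>l\<in>{max j k<..n}. b j k l * (if w = [l] then 1 else 0)) =
        (if \<exists>m\<in>{max j k<..n}. w = [m] then b j k (hd w) else 0)"
  proof (cases "\<exists>m\<in>{max j k<..n}. w = [m]")
    case True
    then obtain m where m: "m \<in> {max j k<..n}" "w = [m]" by blast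
    have "(\<Sum>l\<in>{max j k<..n}. b j k l * (if w = [l] then 1 else 0)) = (\<Sum>l\<in>{max j k<..n}. b j k l * (if m = l then 1 else 0))"
      using m by (intro sum.cong) auto
    then show ?thesis using m by (simp add: sum_if_right)
  next
    case False
    then show ?thesis by (intro trans[OF sum.neutral]) auto
  qed
  show "Poly_Mapping.lookup (lin n (beta j k)) w = Poly_Mapping.lookup (\<Sum>l\<in>{max j k<..n}. smul (b j k l) (gen l)) w"
    unfolding lookup_sum lookup_smul lookup_gen lookup_lin s
    using j k by (auto simp: beta_def)
qed

lemma prod_lin: "j \<in> {1..n} \<Longrightarrow> fmul (lin n x) (gen j) - lin n (mul_gen_vec n b x j) \<in> I"
proof -
  assume j: "j \<in> {1..n}"
  have "fmul (lin n x) (gen j) = (\<Sum>k\<in>{1..n}. smul (x k) (fmul (gen k) (gen j)))"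
    unfolding lin_def fmul_sum_left fmul_smul_left ..
  moreover have "lin n (mul_gen_vec n b x j) = (\<Sum>k\<in>{1..n}. smul (x k) (lin n (beta j k)))"
    unfolding mgv_eq lin_sum ..
  ultimately have "fmul (lin n x) (gen j) - lin n (mul_gen_vec n b x j) =
      (\<Sum>k\<in>{1..n}. smul (x k) (fmul (gen k) (gen j) - lin n (beta j k)))"
    by (simp add: smul_diff sum_subtractf)
  also have "\<dots> = (\<Sum>k\<in>{1..n}. smul (x k) (product_rel n b j k))"
    unfolding product_rel_def using j by (intro sum.cong refl) (simp add: lin_beta)
  also have "\<dots> \<in> I" using j by (intro I_sum I_smul I_prod) auto
  finally show ?thesis .
qed

lemma fmul_unit_right: "fmul p (Poly_Mapping.single [] 1) = p"
  unfolding fmul_single_right_gen by (simp, rule pm_expand[symmetric])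

lemma fw_lemma: "(\<forall>j\<in>set w. j \<in> {1..n}) \<Longrightarrow>
   \<forall>x::nat\<Rightarrow>'r. fmul (lin n x) (Poly_Mapping.single w 1) - lin n (foldl (\<lambda>x j. R (mul_gen_vec n b x j)) x w) \<in> I"
proof (induction w rule: rev_induct)
  case Nil then show ?case by (simp add: fmul_unit_right I_zero)
next
  case (snoc j w)
  show ?case
  proof
    fix x :: "nat \<Rightarrow> 'r"
    let ?A = "fmul (lin n x) (Poly_Mapping.single w 1)"
    let ?Y = "foldl (\<lambda>x j. R (mul_gen_vec n b x j)) x w"
    have j: "j \<in> {1..n}" using snoc.prems by simp
    have h1: "?A - lin n ?Y \<in> I" using snoc by simp
    have "fmul (?A - lin n ?Y) (gen j) \<in> I" by (rule I_fmul_right[OF h1 in_F_gen[OF j]])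
    then have h2: "fmul ?A (gen j) - fmul (lin n ?Y) (gen j) \<in> I" by (simp add: fmul_diff_left)
    have h3: "fmul (lin n ?Y) (gen j) - lin n (mul_gen_vec n b ?Y j) \<in> I" by (rule prod_lin[OF j])
    have h4: "lin n (mul_gen_vec n b ?Y j) - lin n (R (mul_gen_vec n b ?Y j)) \<in> I" by (rule lin_R)
    have e1: "fmul (lin n x) (Poly_Mapping.single (w @ [j]) 1) = fmul ?A (gen j)"
      unfolding gen_def by (simp add: fmul_single_right_word)
    show "fmul (lin n x) (Poly_Mapping.single (w @ [j]) 1) - lin n (foldl (\<lambda>x j. R (mul_gen_vec n b x j)) x (w @ [j])) \<in> I"
      unfolding e1 using I_trans[OF I_trans[OF h2 h3] h4] by simp
  qed
qed

lemma word_lemma: "i \<in> {1..n} \<Longrightarrow> (\<forall>j\<in>set w. j \<in> {1..n}) \<Longrightarrow>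
    Poly_Mapping.single (i # w) 1 - lin n (cw (i # w)) \<in> I"
proof -
  assume i: "i \<in> {1..n}" and w: "\<forall>j\<in>set w. j \<in> {1..n}"
  have e1: "Poly_Mapping.single (i # w) 1 = fmul (lin n (u i)) (Poly_Mapping.single w 1)"
    unfolding gen_lin[OF i, symmetric] gen_def fmul_single by simp
  show ?thesis unfolding e1 collect_word.simps
    using I_trans[OF fw_lemma[OF w, rule_format] lin_R] by simp
qed

lemma coll_correct: "in_F n f \<Longrightarrow> f - collection n r e b f \<in> I"
proof -
  assume F: "in_F n f"
  have e1: "f = (\<Sum>w\<in>Poly_Mapping.keys f. smul (Poly_Mapping.lookup f w) (Poly_Mapping.single w 1))"
    by (subst pm_expand) (simp add: smul_single)
  have e2: "lin n (Phi f) = (\<Sum>w\<in>Poly_Mapping.keys f. smul (Poly_Mapping.lookup f w) (lin n (cw w)))"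
    unfolding Phi_def lin_sum ..
  have "f - lin n (Phi f) = (\<Sum>w\<in>Poly_Mapping.keys f. smul (Poly_Mapping.lookup f w) (Poly_Mapping.single w 1 - lin n (cw w)))"
    by (subst e1, subst e2) (simp add: smul_diff sum_subtractf)
  also have "\<dots> \<in> I"
  proof (rule I_sum, rule I_smul)
    fix w assume "w \<in> Poly_Mapping.keys f"
    then have "w \<noteq> []" "set w \<subseteq> {1..n}" using F unfolding in_F_def by auto
    then obtain i w' where "w = i # w'" "i \<in> {1..n}" "\<forall>j\<in>set w'. j \<in> {1..n}"
      by (cases w) (simp_all add: subset_iff)
    then show "Poly_Mapping.single w 1 - lin n (cw w) \<in> I" using word_lemma by simp
  qed
  finally show ?thesis unfolding coll_eq using I_trans[OF _ lin_R] by blast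
qed

lemma coll_reduced: "reduced_form n r (collection n r e b f)"
  unfolding coll_eq reduced_form_def using reduce_range[unfolded inrange_def] by blast

lemma coll_inF: "in_F n (collection n r e b f)"
  unfolding coll_eq by (rule in_F_lin)

end



context pres begin

abbreviation c where "c \<equiv> collection n r e b"

lemma cons_unique: "consistent n r e b \<Longrightarrow> in_F n f \<Longrightarrow> reduced_form n r v \<Longrightarrow> f - v \<in> I \<Longrightarrow> v = c f"
  unfolding consistent_def using coll_reduced coll_correct by blast

lemma cons_eq: "consistent n r e b \<Longrightarrow> in_F n A \<Longrightarrow> in_F n B \<Longrightarrow> A - B \<in> I \<Longrightarrow> c A = c B"
proof -
  assume cons: "consistent n r e b" and A: "in_F n A" and B: "in_F n B" and AB: "A - B \<in> I"
  have "B - c A = - (A - B) + (A - c A)" by simp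
  also have "\<dots> \<in> I" by (intro I_add I_neg AB coll_correct A)
  finally show ?thesis using cons_unique[OF cons B coll_reduced] by simp
qed

lemma c_minus_I: "in_F n X \<Longrightarrow> c X - X \<in> I"
  using I_neg[OF coll_correct[of X]] by simp

lemma consistent_tests: "consistent n r e b \<Longrightarrow> test_equations n r e b"
proof -
  assume cons: "consistent n r e b"
  have g: "in_F n (gen i :: 'r falg)" if "i \<in> {1..n}" for i using in_F_gen that .
  show ?thesis unfolding test_equations_def Let_def
  proof (intro conjI ballI impI)
    fix i j k assume i: "i \<in> {1..n}" and j: "j \<in> {1..n}" and k: "k \<in> {1..n}"
    let ?X = "fmul (gen j) (gen i) :: 'r falg" and ?Y = "fmul (gen k) (gen j) :: 'r falg"
    let ?A = "fmul (gen k) (c ?X)" and ?B = "fmul (c ?Y) (gen i)"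
    have X: "in_F n ?X" "in_F n ?Y" using g i j k by (auto intro: in_F_fmul)
    have "?A - fmul (gen k) ?X \<in> I"
      unfolding fmul_diff_right[symmetric] by (rule I_fmul_left[OF c_minus_I[OF X(1)] g[OF k]])
    moreover have "?B - fmul ?Y (gen i) \<in> I"
      unfolding fmul_diff_left[symmetric] by (rule I_fmul_right[OF c_minus_I[OF X(2)] g[OF i]])
    moreover have "fmul (gen k) ?X = fmul ?Y (gen i)" by (simp add: gen_def fmul_single)
    ultimately have "?A - ?B \<in> I" using I_diff by fastforce
    then show "c ?A = c ?B"
      by (intro cons_eq[OF cons]) (auto intro!: in_F_fmul g i j k coll_inF)
  next
    fix i j assume i: "i \<in> {1..n}" and j: "j \<in> {1..n}"
    let ?rr = "of_nat (the_enat (r j)) :: 'r"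
    let ?X = "fmul (gen j) (gen i) :: 'r falg"
    let ?A = "smul ?rr (c ?X)" and ?B = "fmul (c (smul ?rr (gen j))) (gen i)"
    have X: "in_F n ?X" "in_F n (smul ?rr (gen j))" using g i j by (auto intro: in_F_fmul in_F_smul)
    have "?A - smul ?rr ?X \<in> I"
      unfolding smul_diff[symmetric] by (rule I_smul[OF c_minus_I[OF X(1)]])
    moreover have "?B - fmul (smul ?rr (gen j)) (gen i) \<in> I"
      unfolding fmul_diff_left[symmetric] by (rule I_fmul_right[OF c_minus_I[OF X(2)] g[OF i]])
    moreover have "smul ?rr ?X = fmul (smul ?rr (gen j)) (gen i)" by (simp add: fmul_smul_left)
    ultimately have "?A - ?B \<in> I" using I_diff by fastforce
    then show "c ?A = c ?B"
      by (intro cons_eq[OF cons]) (auto intro!: in_F_fmul in_F_smul g i j coll_inF)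
  next
    fix i j assume i: "i \<in> {1..n}" and j: "j \<in> {1..n}"
    let ?rr = "of_nat (the_enat (r i)) :: 'r"
    let ?X = "fmul (gen j) (gen i) :: 'r falg"
    let ?A = "smul ?rr (c ?X)" and ?B = "fmul (gen j) (c (smul ?rr (gen i)))"
    have X: "in_F n ?X" "in_F n (smul ?rr (gen i))" using g i j by (auto intro: in_F_fmul in_F_smul)
    have "?A - smul ?rr ?X \<in> I"
      unfolding smul_diff[symmetric] by (rule I_smul[OF c_minus_I[OF X(1)]])
    moreover have "?B - fmul (gen j) (smul ?rr (gen i)) \<in> I"
      unfolding fmul_diff_right[symmetric] by (rule I_fmul_left[OF c_minus_I[OF X(2)] g[OF j]])
    moreover have "smul ?rr ?X = fmul (gen j) (smul ?rr (gen i))" by (simp add: fmul_smul_right)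
    ultimately have "?A - ?B \<in> I" using I_diff by fastforce
    then show "c ?A = c ?B"
      by (intro cons_eq[OF cons]) (auto intro!: in_F_fmul in_F_smul g i j coll_inF)
  qed
qed

end



context pres begin

definition Ev :: "nat \<Rightarrow> nat \<Rightarrow> 'r" where
  "Ev j = (\<lambda>l. if j < l \<and> l \<le> n then e j l else 0)"

abbreviation rr :: "nat \<Rightarrow> 'r" where "rr j \<equiv> of_nat (the_enat (r j))"

lemma rho_eq: "rho j = (\<lambda>l. rr j * u j l - Ev j l)"
  unfolding rho_def Ev_def unit_vec_def by (auto simp: fun_eq_iff)

lemma c_eqv: "c f = c g \<Longrightarrow> eqv (Phi f) (Phi g)"
  unfolding coll_eq using lin_inj R_agree_iff by blast

lemma Phi_c: "eqv (Phi (c f)) (Phi f)"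
  unfolding coll_eq by (rule eqv_trans[OF Phi_lin_eqv eqv_sym[OF reduce_eqv]])

lemma Ev_eqv: "j \<in> {1..n} \<Longrightarrow> r j \<noteq> \<infinity> \<Longrightarrow> eqv (\<lambda>l. rr j * cw [j] l) (Ev j)"
proof -
  assume j: "j \<in> {1..n}" "r j \<noteq> \<infinity>"
  have "eqv (\<lambda>l. rr j * cw [j] l) (\<lambda>l. rr j * u j l)" by (rule eqv_scale[OF eqv_cw1])
  moreover have "eqv (\<lambda>l. rr j * u j l) (Ev j)"
    using inL_rho[of j 0] j unfolding rho_eq Jt_def by simp
  ultimately show ?thesis by (rule eqv_trans)
qed

lemma Phi_gen_smul: "Phi (smul (rr j) (gen j)) = (\<lambda>l. rr j * cw [j] l)"
  unfolding Phi_smul Phi_gen ..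

lemma eqv_P_left: "eqv x x' \<Longrightarrow> (\<And>z. inL 0 z \<Longrightarrow> inL 0 (P z y)) \<Longrightarrow> eqv (P x y) (P x' y)"
  using P_diff_left[of x x' y] by metis

lemma eqv_P_right: "eqv y y' \<Longrightarrow> (\<And>z. inL 0 z \<Longrightarrow> inL 0 (P x z)) \<Longrightarrow> eqv (P x y) (P x y')"
  using P_diff_right[of x y y'] by metis

context
  assumes T: "test_equations n r e b"
begin

lemma T1: "i \<in> {1..n} \<Longrightarrow> j \<in> {1..n} \<Longrightarrow> k \<in> {1..n} \<Longrightarrow> W k + W j + W i \<le> d \<Longrightarrow>
   c (fmul (gen k) (c (fmul (gen j) (gen i)))) = c (fmul (c (fmul (gen k) (gen j))) (gen i))"
  using T unfolding test_equations_def Let_def by blast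

lemma T2: "i \<in> {1..n} \<Longrightarrow> j \<in> {1..n} \<Longrightarrow> r j \<noteq> \<infinity> \<Longrightarrow> W j + W i \<le> d \<Longrightarrow>
   c (smul (rr j) (c (fmul (gen j) (gen i)))) = c (fmul (c (smul (rr j) (gen j))) (gen i))"
  using T unfolding test_equations_def Let_def by blast

lemma T3: "i \<in> {1..n} \<Longrightarrow> j \<in> {1..n} \<Longrightarrow> r i \<noteq> \<infinity> \<Longrightarrow> W j + W i \<le> d \<Longrightarrow>
   c (smul (rr i) (c (fmul (gen j) (gen i)))) = c (fmul (gen j) (c (smul (rr i) (gen i))))"
  using T unfolding test_equations_def Let_def by blast

lemma Phi_gg: "i \<in> {1..n} \<Longrightarrow> j \<in> {1..n} \<Longrightarrow> eqv (Phi (fmul (gen j) (gen i))) (P (u j) (u i))"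
  using Phi_fmul_lin[of "u j" "u i"] by (simp add: gen_lin)

lemma Phi_c_gg: "i \<in> {1..n} \<Longrightarrow> j \<in> {1..n} \<Longrightarrow> eqv (Phi (c (fmul (gen j) (gen i)))) (P (u j) (u i))"
  by (rule eqv_trans[OF Phi_c Phi_gg])

lemma T2': assumes i: "i \<in> {1..n}" and j: "j \<in> {1..n}" and rj: "r j \<noteq> \<infinity>" and w: "W j + W i \<le> d"
  shows "eqv (\<lambda>l. rr j * P (u j) (u i) l) (P (R (Ev j)) (u i))"
proof -
  let ?Y = "Phi (smul (rr j) (gen j))"
  have h: "eqv (Phi (smul (rr j) (c (fmul (gen j) (gen i))))) (Phi (fmul (c (smul (rr j) (gen j))) (gen i)))"
    by (rule c_eqv[OF T2[OF i j rj w]])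
  have l: "eqv (Phi (smul (rr j) (c (fmul (gen j) (gen i))))) (\<lambda>l. rr j * P (u j) (u i) l)"
    unfolding Phi_smul by (rule eqv_scale[OF Phi_c_gg[OF i j]])
  have "fmul (c (smul (rr j) (gen j))) (gen i) = fmul (lin n (R ?Y)) (lin n (u i))"
    unfolding coll_eq gen_lin[OF i] ..
  then have r1: "eqv (Phi (fmul (c (smul (rr j) (gen j))) (gen i))) (P (R ?Y) (u i))"
    using Phi_fmul_lin by simp
  have "agree (R ?Y) (R (Ev j))"
    unfolding R_agree_iff Phi_gen_smul by (rule Ev_eqv[OF j rj])
  then have "P (R ?Y) (u i) = P (R (Ev j)) (u i)" by (rule P_cong_left)
  then show ?thesis using eqv_trans[OF eqv_sym[OF l] eqv_trans[OF h r1]] by simp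
qed

lemma T3': assumes i: "i \<in> {1..n}" and j: "j \<in> {1..n}" and ri: "r i \<noteq> \<infinity>" and w: "W j + W i \<le> d"
  shows "eqv (\<lambda>l. rr i * P (u j) (u i) l) (P (u j) (R (Ev i)))"
proof -
  let ?Y = "Phi (smul (rr i) (gen i))"
  have h: "eqv (Phi (smul (rr i) (c (fmul (gen j) (gen i))))) (Phi (fmul (gen j) (c (smul (rr i) (gen i)))))"
    by (rule c_eqv[OF T3[OF i j ri w]])
  have l: "eqv (Phi (smul (rr i) (c (fmul (gen j) (gen i))))) (\<lambda>l. rr i * P (u j) (u i) l)"
    unfolding Phi_smul by (rule eqv_scale[OF Phi_c_gg[OF i j]])
  have "fmul (gen j) (c (smul (rr i) (gen i))) = fmul (lin n (u j)) (lin n (R ?Y))"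
    unfolding coll_eq gen_lin[OF j] ..
  then have r1: "eqv (Phi (fmul (gen j) (c (smul (rr i) (gen i))))) (P (u j) (R ?Y))"
    using Phi_fmul_lin by simp
  have "agree (R ?Y) (R (Ev i))"
    unfolding R_agree_iff Phi_gen_smul by (rule Ev_eqv[OF i ri])
  then have "P (u j) (R ?Y) = P (u j) (R (Ev i))" by (rule P_cong_right)
  then show ?thesis using eqv_trans[OF eqv_sym[OF l] eqv_trans[OF h r1]] by simp
qed

lemma Ev_low: "inL j (\<lambda>l. Ev j l - R (Ev j) l)"
  by (rule reduce_diff_low) (simp add: Ev_def)

lemma WD1: "j \<in> Jt 0 \<Longrightarrow> i \<in> {1..n} \<Longrightarrow> inL 0 (P (rho j) (u i))"
proof (induction "n - j" arbitrary: j i rule: less_induct)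
  case less
  have j: "j \<in> {1..n}" "r j \<noteq> \<infinity>" using less.prems unfolding Jt_def by auto
  have i: "i \<in> {1..n}" by (rule less.prems(2))
  show ?case
  proof (cases "W j + W i \<le> d")
    case False
    have "hw (W j + W i) (P (rho j) (u i))" by (rule hw_P[OF hw_rho[OF j] hw_unit])
    then show ?thesis using False by (intro inL_agree0 hw_big) auto
  next
    case True
    have a: "inL 0 (\<lambda>l. rr j * P (u j) (u i) l - P (R (Ev j)) (u i) l)" by (rule T2'[OF i j(1) j(2) True])
    obtain cc where cc: "\<forall>l\<in>{1..n}. Ev j l - R (Ev j) l = (\<Sum>i'\<in>Jt j. cc i' * rho i' l)"
      using Ev_low unfolding inL_def by blast
    have "P (\<lambda>l. Ev j l - R (Ev j) l) (u i) = P (\<lambda>l. \<Sum>i'\<in>Jt j. cc i' * rho i' l) (u i)"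
      by (rule P_cong_left) (simp add: agree_def cc)
    also have "\<dots> = (\<lambda>l. \<Sum>i'\<in>Jt j. cc i' * P (rho i') (u i) l)" by (rule P_sum_left)
    finally have eq: "P (\<lambda>l. Ev j l - R (Ev j) l) (u i) = (\<lambda>l. \<Sum>i'\<in>Jt j. cc i' * P (rho i') (u i) l)" .
    have "inL 0 (\<lambda>l. \<Sum>i'\<in>Jt j. cc i' * P (rho i') (u i) l)"
    proof (rule inL_combo)
      fix i' assume i': "i' \<in> Jt j"
      then have "n - i' < n - j" "i' \<in> Jt 0" unfolding Jt_def by auto
      then show "inL 0 (P (rho i') (u i))" using less.hyps i by blast
    qed
    then have b: "inL 0 (\<lambda>l. P (R (Ev j)) (u i) l - P (Ev j) (u i) l)"
      using inL_neg[of 0 "P (\<lambda>l. Ev j l - R (Ev j) l) (u i)"] unfolding eq[symmetric] P_diff_left by simp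
    have "P (rho j) (u i) = (\<lambda>l. rr j * P (u j) (u i) l - P (Ev j) (u i) l)"
      unfolding rho_eq P_diff_left P_scale_left ..
    then show ?thesis using inL_add[OF a b] by simp
  qed
qed

lemma WD2: "i \<in> Jt 0 \<Longrightarrow> j \<in> {1..n} \<Longrightarrow> inL 0 (P (u j) (rho i))"
proof (induction "n - i" arbitrary: i j rule: less_induct)
  case less
  have i: "i \<in> {1..n}" "r i \<noteq> \<infinity>" using less.prems unfolding Jt_def by auto
  have j: "j \<in> {1..n}" by (rule less.prems(2))
  show ?case
  proof (cases "W j + W i \<le> d")
    case False
    have "hw (W j + W i) (P (u j) (rho i))" by (rule hw_P[OF hw_unit hw_rho[OF i]])
    then show ?thesis using False by (intro inL_agree0 hw_big) auto
  next
    case True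
    have a: "inL 0 (\<lambda>l. rr i * P (u j) (u i) l - P (u j) (R (Ev i)) l)" by (rule T3'[OF i(1) j i(2) True])
    obtain cc where cc: "\<forall>l\<in>{1..n}. Ev i l - R (Ev i) l = (\<Sum>i'\<in>Jt i. cc i' * rho i' l)"
      using Ev_low unfolding inL_def by blast
    have "P (u j) (\<lambda>l. Ev i l - R (Ev i) l) = P (u j) (\<lambda>l. \<Sum>i'\<in>Jt i. cc i' * rho i' l)"
      by (rule P_cong_right) (simp add: agree_def cc)
    also have "\<dots> = (\<lambda>l. \<Sum>i'\<in>Jt i. cc i' * P (u j) (rho i') l)" by (rule P_sum_right)
    finally have eq: "P (u j) (\<lambda>l. Ev i l - R (Ev i) l) = (\<lambda>l. \<Sum>i'\<in>Jt i. cc i' * P (u j) (rho i') l)" .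
    have "inL 0 (\<lambda>l. \<Sum>i'\<in>Jt i. cc i' * P (u j) (rho i') l)"
    proof (rule inL_combo)
      fix i' assume i': "i' \<in> Jt i"
      then have "n - i' < n - i" "i' \<in> Jt 0" unfolding Jt_def by auto
      then show "inL 0 (P (u j) (rho i'))" using less.hyps j by blast
    qed
    then have b: "inL 0 (\<lambda>l. P (u j) (R (Ev i)) l - P (u j) (Ev i) l)"
      using inL_neg[of 0 "P (u j) (\<lambda>l. Ev i l - R (Ev i) l)"] unfolding eq[symmetric] P_diff_right by simp
    have "P (u j) (rho i) = (\<lambda>l. rr i * P (u j) (u i) l - P (u j) (Ev i) l)"
      unfolding rho_eq P_diff_right P_scale_right ..
    then show ?thesis using inL_add[OF a b] by simp
  qed
qed

lemma WD_left: "inL 0 z \<Longrightarrow> inL 0 (P z y)"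
proof -
  assume "inL 0 z"
  then obtain cc where cc: "\<forall>l\<in>{1..n}. z l = (\<Sum>i\<in>Jt 0. cc i * rho i l)" unfolding inL_def by blast
  have "P z y = P (\<lambda>l. \<Sum>i\<in>Jt 0. cc i * rho i l) y"
    by (rule P_cong_left) (simp add: agree_def cc)
  also have "\<dots> = (\<lambda>l. \<Sum>i\<in>Jt 0. cc i * P (rho i) y l)" by (rule P_sum_left)
  finally have eq: "P z y = (\<lambda>l. \<Sum>i\<in>Jt 0. cc i * P (rho i) y l)" .
  have "inL 0 (\<lambda>l. \<Sum>i\<in>Jt 0. cc i * P (rho i) y l)"
  proof (rule inL_combo)
    fix i assume i: "i \<in> Jt 0"
    show "inL 0 (P (rho i) y)"
      by (subst P_expand_right, rule inL_combo, rule WD1[OF i]) simp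
  qed
  then show ?thesis unfolding eq .
qed

lemma WD_right: "inL 0 z \<Longrightarrow> inL 0 (P y z)"
proof -
  assume "inL 0 z"
  then obtain cc where cc: "\<forall>l\<in>{1..n}. z l = (\<Sum>i\<in>Jt 0. cc i * rho i l)" unfolding inL_def by blast
  have "P y z = P y (\<lambda>l. \<Sum>i\<in>Jt 0. cc i * rho i l)"
    by (rule P_cong_right) (simp add: agree_def cc)
  also have "\<dots> = (\<lambda>l. \<Sum>i\<in>Jt 0. cc i * P y (rho i) l)" by (rule P_sum_right)
  finally have eq: "P y z = (\<lambda>l. \<Sum>i\<in>Jt 0. cc i * P y (rho i) l)" .
  have "inL 0 (\<lambda>l. \<Sum>i\<in>Jt 0. cc i * P y (rho i) l)"
  proof (rule inL_combo)
    fix i assume i: "i \<in> Jt 0"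
    show "inL 0 (P y (rho i))"
      by (subst P_expand_left, rule inL_combo, rule WD2[OF i]) simp
  qed
  then show ?thesis unfolding eq .
qed

lemma eqvPl: "eqv x x' \<Longrightarrow> eqv (P x y) (P x' y)"
  by (rule eqv_P_left, assumption, rule WD_left)
lemma eqvPr: "eqv y y' \<Longrightarrow> eqv (P x y) (P x y')"
  by (rule eqv_P_right, assumption, rule WD_right)


lemma assoc_u: assumes k: "k \<in> {1..n}" and j: "j \<in> {1..n}" and i: "i \<in> {1..n}"
  shows "eqv (P (u k) (P (u j) (u i))) (P (P (u k) (u j)) (u i))"
proof (cases "W k + W j + W i \<le> d")
  case True
  let ?X1 = "fmul (gen j) (gen i) :: 'r falg" and ?X2 = "fmul (gen k) (gen j) :: 'r falg"
  have h: "eqv (Phi (fmul (gen k) (c ?X1))) (Phi (fmul (c ?X2) (gen i)))"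
    by (rule c_eqv[OF T1[OF i j k True]])
  have "fmul (gen k) (c ?X1) = fmul (lin n (u k)) (lin n (R (Phi ?X1)))"
    unfolding coll_eq gen_lin[OF k] ..
  then have l1: "eqv (Phi (fmul (gen k) (c ?X1))) (P (u k) (R (Phi ?X1)))"
    using Phi_fmul_lin by simp
  have l2: "eqv (P (u k) (R (Phi ?X1))) (P (u k) (P (u j) (u i)))"
    by (rule eqvPr, rule eqv_trans[OF eqv_sym[OF reduce_eqv] Phi_gg[OF i j]])
  have "fmul (c ?X2) (gen i) = fmul (lin n (R (Phi ?X2))) (lin n (u i))"
    unfolding coll_eq gen_lin[OF i] ..
  then have r1: "eqv (Phi (fmul (c ?X2) (gen i))) (P (R (Phi ?X2)) (u i))"
    using Phi_fmul_lin by simp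
  have r2: "eqv (P (R (Phi ?X2)) (u i)) (P (P (u k) (u j)) (u i))"
    by (rule eqvPl, rule eqv_trans[OF eqv_sym[OF reduce_eqv] Phi_gg[OF j k]])
  show ?thesis
    using eqv_trans[OF eqv_sym[OF l2] eqv_trans[OF eqv_sym[OF l1] eqv_trans[OF h eqv_trans[OF r1 r2]]]] .
next
  case False
  have a: "hw (W k + (W j + W i)) (P (u k) (P (u j) (u i)))" by (intro hw_P hw_unit)
  have b: "hw ((W k + W j) + W i) (P (P (u k) (u j)) (u i))" by (intro hw_P hw_unit)
  have a0: "agree (P (u k) (P (u j) (u i))) (\<lambda>_. 0)" using hw_big[OF a] False by simp
  have b0: "agree (P (P (u k) (u j)) (u i)) (\<lambda>_. 0)" using hw_big[OF b] False by simp
  show ?thesis by (rule inL_agree0) (use a0 b0 in \<open>simp add: agree_def\<close>)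
qed

lemma assoc1: "j \<in> {1..n} \<Longrightarrow> i \<in> {1..n} \<Longrightarrow> eqv (P x (P (u j) (u i))) (P (P x (u j)) (u i))"
proof -
  assume j: "j \<in> {1..n}" and i: "i \<in> {1..n}"
  have "eqv (\<lambda>l. \<Sum>k\<in>{1..n}. x k * P (u k) (P (u j) (u i)) l) (\<lambda>l. \<Sum>k\<in>{1..n}. x k * P (P (u k) (u j)) (u i) l)"
    by (rule eqv_combo[where f = "\<lambda>k. P (u k) (P (u j) (u i))" and g = "\<lambda>k. P (P (u k) (u j)) (u i)"])
       (rule assoc_u[OF _ j i], simp)
  moreover have "(\<lambda>l. \<Sum>k\<in>{1..n}. x k * P (u k) (P (u j) (u i)) l) = P x (P (u j) (u i))"
    by (rule P_expand_left[symmetric])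
  moreover have "(\<lambda>l. \<Sum>k\<in>{1..n}. x k * P (P (u k) (u j)) (u i) l) = P (P x (u j)) (u i)"
    by (subst P_expand_left[of x "u j"]) (rule P_sum_left[symmetric])
  ultimately show ?thesis by (metis eqv_subst)
qed

lemma assoc2: "i \<in> {1..n} \<Longrightarrow> eqv (P x (P y (u i))) (P (P x y) (u i))"
proof -
  assume i: "i \<in> {1..n}"
  have "eqv (\<lambda>l. \<Sum>j\<in>{1..n}. y j * P x (P (u j) (u i)) l) (\<lambda>l. \<Sum>j\<in>{1..n}. y j * P (P x (u j)) (u i) l)"
    by (rule eqv_combo[where f = "\<lambda>j. P x (P (u j) (u i))" and g = "\<lambda>j. P (P x (u j)) (u i)"])
       (rule assoc1[OF _ i], simp)
  moreover have "(\<lambda>l. \<Sum>j\<in>{1..n}. y j * P x (P (u j) (u i)) l) = P x (P y (u i))"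
    by (subst P_expand_left[of y "u i"]) (rule P_sum_right[symmetric])
  moreover have "(\<lambda>l. \<Sum>j\<in>{1..n}. y j * P (P x (u j)) (u i) l) = P (P x y) (u i)"
    by (subst P_expand_right[of x y]) (rule P_sum_left[symmetric])
  ultimately show ?thesis by (metis eqv_subst)
qed

lemma assoc: "eqv (P x (P y z)) (P (P x y) z)"
proof -
  have "eqv (\<lambda>l. \<Sum>i\<in>{1..n}. z i * P x (P y (u i)) l) (\<lambda>l. \<Sum>i\<in>{1..n}. z i * P (P x y) (u i) l)"
    by (rule eqv_combo[where f = "\<lambda>i. P x (P y (u i))" and g = "\<lambda>i. P (P x y) (u i)"])
       (rule assoc2, simp)
  moreover have "(\<lambda>l. \<Sum>i\<in>{1..n}. z i * P x (P y (u i)) l) = P x (P y z)"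
    by (subst P_expand_right[of y z]) (rule P_sum_right[symmetric])
  moreover have "(\<lambda>l. \<Sum>i\<in>{1..n}. z i * P (P x y) (u i) l) = P (P x y) z"
    by (rule P_expand_right[symmetric])
  ultimately show ?thesis by (metis eqv_subst)
qed

lemma cw_step: "v \<noteq> [] \<Longrightarrow> j \<in> {1..n} \<Longrightarrow> eqv (cw (v @ [j])) (P (cw v) (u j))"
proof -
  assume v: "v \<noteq> []" and j: "j \<in> {1..n}"
  then obtain i w where vw: "v = i # w" by (cases v) auto
  let ?Y = "foldl (\<lambda>x j. R (mul_gen_vec n b x j)) (u i) w"
  have e1: "cw (v @ [j]) = R (R (P ?Y (u j)))" unfolding vw P_unit_right[OF j] by simp
  have e2: "cw v = R ?Y" unfolding vw by simp
  show ?thesis unfolding e1 e2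
    by (rule eqv_trans[OF eqv_sym[OF eqv_trans[OF reduce_eqv reduce_eqv]] eqvPl[OF reduce_eqv]])
qed

lemma cw_assoc: "v \<noteq> [] \<Longrightarrow> set v' \<subseteq> {1..n} \<Longrightarrow> v' \<noteq> [] \<Longrightarrow> eqv (cw (v @ v')) (P (cw v) (cw v'))"
proof (induction v' rule: rev_induct)
  case Nil then show ?case by simp
next
  case (snoc j v'')
  have j: "j \<in> {1..n}" using snoc.prems by simp
  show ?case
  proof (cases "v'' = []")
    case True
    have "eqv (cw (v @ [j])) (P (cw v) (u j))" by (rule cw_step[OF snoc.prems(1) j])
    moreover have "eqv (P (cw v) (u j)) (P (cw v) (cw [j]))" by (rule eqvPr[OF eqv_sym[OF eqv_cw1]])
    ultimately show ?thesis using True eqv_trans by simp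
  next
    case False
    have IH: "eqv (cw (v @ v'')) (P (cw v) (cw v''))" using snoc False by simp
    have s1: "eqv (cw ((v @ v'') @ [j])) (P (cw (v @ v'')) (u j))" by (rule cw_step[OF _ j]) (use snoc.prems in simp)
    have s2: "eqv (P (cw (v @ v'')) (u j)) (P (P (cw v) (cw v'')) (u j))" by (rule eqvPl[OF IH])
    have s3: "eqv (P (P (cw v) (cw v'')) (u j)) (P (cw v) (P (cw v'') (u j)))" by (rule eqv_sym[OF assoc])
    have s4: "eqv (P (cw v) (P (cw v'') (u j))) (P (cw v) (cw (v'' @ [j])))"
      by (rule eqvPr, rule eqv_sym, rule cw_step[OF False j])
    show ?thesis using eqv_trans[OF s1 eqv_trans[OF s2 eqv_trans[OF s3 s4]]] by simp
  qed
qed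

lemma Phi_fmul: assumes p: "in_F n p" and q: "in_F n q"
  shows "eqv (Phi (fmul p q)) (P (Phi p) (Phi q))"
proof -
  have e1: "Phi (fmul p q) = (\<lambda>l. \<Sum>a\<in>Poly_Mapping.keys p. Poly_Mapping.lookup p a *
      (\<Sum>v\<in>Poly_Mapping.keys q. Poly_Mapping.lookup q v * cw (a @ v) l))"
    unfolding fmul_def Phi_sum Phi_single by (simp add: sum_distrib_left mult.assoc)
  have e2: "P (Phi p) (Phi q) = (\<lambda>l. \<Sum>a\<in>Poly_Mapping.keys p. Poly_Mapping.lookup p a *
      (\<Sum>v\<in>Poly_Mapping.keys q. Poly_Mapping.lookup q v * P (cw a) (cw v) l))"
    unfolding Phi_def P_sum_left P_sum_right ..
  have "eqv (\<lambda>l. \<Sum>a\<in>Poly_Mapping.keys p. Poly_Mapping.lookup p a *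
      (\<Sum>v\<in>Poly_Mapping.keys q. Poly_Mapping.lookup q v * cw (a @ v) l))
     (\<lambda>l. \<Sum>a\<in>Poly_Mapping.keys p. Poly_Mapping.lookup p a *
      (\<Sum>v\<in>Poly_Mapping.keys q. Poly_Mapping.lookup q v * P (cw a) (cw v) l))"
  proof (rule eqv_combo[where f = "\<lambda>a l. \<Sum>v\<in>Poly_Mapping.keys q. Poly_Mapping.lookup q v * cw (a @ v) l"
                      and g = "\<lambda>a l. \<Sum>v\<in>Poly_Mapping.keys q. Poly_Mapping.lookup q v * P (cw a) (cw v) l"])
    fix a assume a: "a \<in> Poly_Mapping.keys p"
    show "eqv (\<lambda>l. \<Sum>v\<in>Poly_Mapping.keys q. Poly_Mapping.lookup q v * cw (a @ v) l)
              (\<lambda>l. \<Sum>v\<in>Poly_Mapping.keys q. Poly_Mapping.lookup q v * P (cw a) (cw v) l)"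
    proof (rule eqv_combo[where f = "\<lambda>v. cw (a @ v)" and g = "\<lambda>v. P (cw a) (cw v)"])
      fix v assume v: "v \<in> Poly_Mapping.keys q"
      show "eqv (cw (a @ v)) (P (cw a) (cw v))"
        using p q a v unfolding in_F_def by (intro cw_assoc) auto
    qed
  qed
  then show ?thesis unfolding e1 e2 .
qed

lemma ideal_Phi: "x \<in> ideal_gen n (relations n r e b) \<Longrightarrow> in_F n x \<and> inL 0 (Phi x)"
proof (induction rule: ideal_gen.induct)
  case (base s)
  then show ?case unfolding relations_def
  proof (elim UnE CollectE exE conjE)
    fix i assume s: "s = power_rel n r e i" and i: "i \<in> {1..n}" and ri: "r i \<noteq> \<infinity>"
    have iJ: "i \<in> Jt 0" using i ri unfolding Jt_def by auto
    show "in_F n s \<and> inL 0 (Phi s)" unfolding s lin_rho[OF i, symmetric]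
      using in_F_lin eqv_inL[OF Phi_lin_eqv inL_rho[OF iJ]] by blast
  next
    fix i j assume s: "s = product_rel n b i j" and i: "i \<in> {1..n}" and j: "j \<in> {1..n}"
    have s': "s = fmul (gen j) (gen i) - lin n (beta i j)"
      unfolding s product_rel_def lin_beta[OF i j] ..
    have F: "in_F n s" unfolding s' by (intro in_F_diff in_F_fmul in_F_gen in_F_lin i j)
    have h1: "eqv (Phi s) (\<lambda>l. P (u j) (u i) l - beta i j l)"
      unfolding s' Phi_diff by (rule eqv_diff[OF Phi_gg[OF i j] Phi_lin_eqv])
    have h2: "inL 0 (\<lambda>l. P (u j) (u i) l - beta i j l)"
      by (rule inL_agree0) (use P_unit_unit[OF j i] in \<open>simp add: agree_def\<close>)
    show "in_F n s \<and> inL 0 (Phi s)" using F eqv_inL[OF h1 h2] by blast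
  qed
next
  case zero then show ?case by (simp add: Phi_zero inL_zero)
next
  case (add x y) then show ?case by (simp add: Phi_add inL_add in_F_add)
next
  case (scal x cc) then show ?case by (simp add: Phi_smul inL_scale in_F_smul)
next
  case (mult_left x f)
  have "eqv (Phi (fmul f x)) (P (Phi f) (Phi x))" using Phi_fmul mult_left by blast
  moreover have "inL 0 (P (Phi f) (Phi x))" using WD_right mult_left by blast
  ultimately show ?case using eqv_inL in_F_fmul mult_left by blast
next
  case (mult_right x f)
  have "eqv (Phi (fmul x f)) (P (Phi x) (Phi f))" using Phi_fmul mult_right by blast
  moreover have "inL 0 (P (Phi x) (Phi f))" using WD_left mult_right by blast
  ultimately show ?case using eqv_inL in_F_fmul mult_right by blast
qed

lemma tests_consistent: "consistent n r e b"
  unfolding consistent_def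
proof (intro allI impI)
  fix f :: "'r falg" assume F: "in_F n f"
  show "\<exists>!v. reduced_form n r v \<and> f - v \<in> I"
  proof (rule ex1I[of _ "c f"])
    show "reduced_form n r (c f) \<and> f - c f \<in> I" using coll_reduced coll_correct[OF F] by blast
  next
    fix y assume y: "reduced_form n r y \<and> f - y \<in> I"
    then obtain x where x: "\<forall>k\<in>{1..n}. in_range (r k) (x k)" and yx: "y = lin n x"
      unfolding reduced_form_def by blast
    have "y - c f = (f - c f) - (f - y)" by simp
    also have "\<dots> \<in> I" using I_diff coll_correct[OF F] y by blast
    finally have "inL 0 (Phi (y - c f))" using ideal_Phi unfolding pres_ideal_def by blast
    then have h: "eqv (Phi y) (Phi (c f))" unfolding Phi_diff .
    have h': "eqv (Phi (lin n x)) (Phi (lin n (R (Phi f))))" using h unfolding yx coll_eq .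
    have "eqv x (R (Phi f))"
      using eqv_trans[OF eqv_sym[OF Phi_lin_eqv] eqv_trans[OF h' Phi_lin_eqv]] .
    then have "agree x (R (Phi f))" using range_unique reduce_range x unfolding inrange_def by blast
    then show "y = c f" unfolding yx coll_eq by (rule lin_agree)
  qed
qed

end

theorem main_equiv: "consistent n r e b \<longleftrightarrow> test_equations n r e b"
  using consistent_tests tests_consistent by blast

end

lemma int_div_ex:
  assumes m: "0 < m"
  shows "\<exists>!p. (x::int) = of_nat m * fst p + snd p \<and> snd p \<in> of_nat ` {0..<m}"
proof (rule ex1I[of _ "(x div int m, x mod int m)"])
  have "x mod int m = int (nat (x mod int m))" using m by simp
  moreover have "nat (x mod int m) < m" using m by (simp add: nat_less_iff)
  ultimately have "x mod int m \<in> of_nat ` {0..<m}" by (metis atLeastLessThan_iff image_eqI le0 of_nat_eq_id id_apply)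
  then show "x = of_nat m * fst (x div int m, x mod int m) + snd (x div int m, x mod int m) \<and>
    snd (x div int m, x mod int m) \<in> of_nat ` {0..<m}" by simp
next
  fix p :: "int \<times> int"
  assume h: "x = of_nat m * fst p + snd p \<and> snd p \<in> of_nat ` {0..<m}"
  then obtain s where s: "s < m" "snd p = int s" by auto
  have e: "x = int m * fst p + snd p" using h by simp
  have "x div int m = fst p" by (rule int_div_pos_eq[OF e]) (use s in auto)
  moreover have "x mod int m = snd p" by (rule int_mod_pos_eq[OF e]) (use s in auto)
  ultimately show "p = (x div int m, x mod int m)" by (simp add: prod_eq_iff)
qed

theorem theorem2:
  shows "(\<forall>n (r :: nat \<Rightarrow> enat) (e :: nat \<Rightarrow> nat \<Rightarrow> int) b.
            nilpotent_presentation n r e b \<longrightarrow>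
              (consistent n r e b \<longleftrightarrow> test_equations n r e b)) \<and>
         (\<forall>n (e :: nat \<Rightarrow> nat \<Rightarrow> 'k::field) b.
            nilpotent_presentation n (\<lambda>_. \<infinity>) e b \<longrightarrow>
              (consistent n (\<lambda>_. \<infinity>) e b \<longleftrightarrow> test_equations n (\<lambda>_. \<infinity>) e b))"
proof (intro conjI allI impI)
  fix n and r :: "nat \<Rightarrow> enat" and e :: "nat \<Rightarrow> nat \<Rightarrow> int" and b
  assume NP: "nilpotent_presentation n r e b"
  interpret pres n r e b
  proof
    fix k m and x :: int
    assume k: "k \<in> {1..n}" and rk: "r k = enat m"
    have "r k \<noteq> 0" using NP k unfolding nilpotent_presentation_def by blast
    then have "0 < m" using rk by (simp add: zero_enat_def)
    then show "\<exists>!p. x = of_nat m * fst p + snd p \<and> snd p \<in> of_nat ` {0..<m}" by (rule int_div_ex)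
  qed
  show "consistent n r e b \<longleftrightarrow> test_equations n r e b" by (rule main_equiv)
next
  fix n and e :: "nat \<Rightarrow> nat \<Rightarrow> 'k::field" and b
  assume NP: "nilpotent_presentation n (\<lambda>_. \<infinity>) e b"
  interpret pres n "\<lambda>_. \<infinity>" e b by unfold_locales simp
  show "consistent n (\<lambda>_. \<infinity>) e b \<longleftrightarrow> test_equations n (\<lambda>_. \<infinity>) e b" by (rule main_equiv)
qed

end
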